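(* Let $k$ be an infinite field of characteristic $0$. If $(L,V)\in\mathrm{Ob}\,\Xi^0$ is a cyclic free representation and $\Phi$ is an automorphism of the category $\Xi^0$, then $\Phi(L,V)$ is also a cyclic free representation.
   Context: Representations $(L,V)$: Lie algebra $L$ over $k$ and $L$-module $V$; homomorphisms $(\varphi,\psi)$ with $\varphi$ a Lie homomorphism, $\psi$ linear, $\varphi(l)\circ\psi(v)=\psi(l\circ v)$. $W(X,Y)=(L(X),A(X)Y)$ is the free representation ($L(X)$ free Lie algebra, $A(X)$ free unital associative algebra on $X$, $A(X)Y$ free $A(X)$-module with basis $Y$). With fixed countably infinite sets $X^0,Y^0$, $\Xi^0$ is the category whose objects are the $W(X,Y)$ with finite $X\subset X^0$, $Y\subset Y^0$ and whose morphisms are all homomorphisms between them. $W(X,Y)$ is called cyclic if $X=\{x\}$ and $Y=\{y\}$ are singletons. *)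

theory Defs
  imports Main "HOL-Library.Countable_Set"
begin

text \<open>Noncommutative polynomials: functions from words over the alphabet to k
  with finite support; A(X) consists of those supported on words over X.\<close>

type_synonym ('a,'k) ncpoly = "'a list \<Rightarrow> 'k"
type_synonym ('a,'b,'k) fmodel = "'a list \<times> 'b \<Rightarrow> 'k"

definition ncpolys :: "'a set \<Rightarrow> ('a,'k::field) ncpoly set" where
  "ncpolys X = {p. finite {w. p w \<noteq> 0} \<and> (\<forall>w. p w \<noteq> 0 \<longrightarrow> set w \<subseteq> X)}"

definition nc_zero :: "('a,'k::field) ncpoly" where
  "nc_zero = (\<lambda>w. 0)"

definition nc_add :: "('a,'k::field) ncpoly \<Rightarrow> ('a,'k) ncpoly \<Rightarrow> ('a,'k) ncpoly" where
  "nc_add p q = (\<lambda>w. p w + q w)"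

definition nc_scale :: "'k::field \<Rightarrow> ('a,'k) ncpoly \<Rightarrow> ('a,'k) ncpoly" where
  "nc_scale c p = (\<lambda>w. c * p w)"

definition nc_mult :: "('a,'k::field) ncpoly \<Rightarrow> ('a,'k) ncpoly \<Rightarrow> ('a,'k) ncpoly" where
  "nc_mult p q = (\<lambda>w. \<Sum>i\<le>length w. p (take i w) * q (drop i w))"

definition nc_gen :: "'a \<Rightarrow> ('a,'k::field) ncpoly" where
  "nc_gen x = (\<lambda>w. if w = [x] then 1 else 0)"

definition nc_bracket :: "('a,'k::field) ncpoly \<Rightarrow> ('a,'k) ncpoly \<Rightarrow> ('a,'k) ncpoly" where
  "nc_bracket p q = (\<lambda>w. nc_mult p q w - nc_mult q p w)"

section \<open>Free Lie algebra L(X), realised as the Lie subalgebra of A(X) generated by X\<close>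

inductive_set lie_elems :: "'a set \<Rightarrow> ('a,'k::field) ncpoly set" for X where
  gen: "x \<in> X \<Longrightarrow> nc_gen x \<in> lie_elems X"
| zero: "nc_zero \<in> lie_elems X"
| add: "p \<in> lie_elems X \<Longrightarrow> q \<in> lie_elems X \<Longrightarrow> nc_add p q \<in> lie_elems X"
| scale: "p \<in> lie_elems X \<Longrightarrow> nc_scale c p \<in> lie_elems X"
| bracket: "p \<in> lie_elems X \<Longrightarrow> q \<in> lie_elems X \<Longrightarrow> nc_bracket p q \<in> lie_elems X"

section \<open>Free A(X)-module A(X)Y with basis Y\<close>

definition fmod :: "'a set \<Rightarrow> 'b set \<Rightarrow> ('a,'b,'k::field) fmodel set" where
  "fmod X Y = {m. finite {wy. m wy \<noteq> 0} \<and>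
      (\<forall>w y. m (w, y) \<noteq> 0 \<longrightarrow> set w \<subseteq> X \<and> y \<in> Y)}"

definition fm_zero :: "('a,'b,'k::field) fmodel" where
  "fm_zero = (\<lambda>wy. 0)"

definition fm_add :: "('a,'b,'k::field) fmodel \<Rightarrow> ('a,'b,'k) fmodel \<Rightarrow> ('a,'b,'k) fmodel" where
  "fm_add m n = (\<lambda>wy. m wy + n wy)"

definition fm_scale :: "'k::field \<Rightarrow> ('a,'b,'k) fmodel \<Rightarrow> ('a,'b,'k) fmodel" where
  "fm_scale c m = (\<lambda>wy. c * m wy)"

definition fm_act :: "('a,'k::field) ncpoly \<Rightarrow> ('a,'b,'k) fmodel \<Rightarrow> ('a,'b,'k) fmodel" where
  "fm_act p m = (\<lambda>(w, y). \<Sum>i\<le>length w. p (take i w) * m (drop i w, y))"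

text \<open>Maps are represented extensionally: they are 0 outside their domain.\<close>

definition lie_hom_on :: "'a set \<Rightarrow> 'a set \<Rightarrow> (('a,'k::field) ncpoly \<Rightarrow> ('a,'k) ncpoly) \<Rightarrow> bool" where
  "lie_hom_on X X' \<phi> \<longleftrightarrow>
     (\<forall>p\<in>lie_elems X. \<phi> p \<in> lie_elems X') \<and>
     (\<forall>p. p \<notin> lie_elems X \<longrightarrow> \<phi> p = nc_zero) \<and>
     (\<forall>p\<in>lie_elems X. \<forall>q\<in>lie_elems X. \<phi> (nc_add p q) = nc_add (\<phi> p) (\<phi> q)) \<and>
     (\<forall>c. \<forall>p\<in>lie_elems X. \<phi> (nc_scale c p) = nc_scale c (\<phi> p)) \<and>
     (\<forall>p\<in>lie_elems X. \<forall>q\<in>lie_elems X. \<phi> (nc_bracket p q) = nc_bracket (\<phi> p) (\<phi> q))"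

definition lin_on_fmod :: "'a set \<Rightarrow> 'b set \<Rightarrow> 'a set \<Rightarrow> 'b set
     \<Rightarrow> (('a,'b,'k::field) fmodel \<Rightarrow> ('a,'b,'k) fmodel) \<Rightarrow> bool" where
  "lin_on_fmod X Y X' Y' \<psi> \<longleftrightarrow>
     (\<forall>m\<in>fmod X Y. \<psi> m \<in> fmod X' Y') \<and>
     (\<forall>m. m \<notin> fmod X Y \<longrightarrow> \<psi> m = fm_zero) \<and>
     (\<forall>m\<in>fmod X Y. \<forall>n\<in>fmod X Y. \<psi> (fm_add m n) = fm_add (\<psi> m) (\<psi> n)) \<and>
     (\<forall>c. \<forall>m\<in>fmod X Y. \<psi> (fm_scale c m) = fm_scale c (\<psi> m))"

definition rep_hom :: "'a set \<Rightarrow> 'b set \<Rightarrow> 'a set \<Rightarrow> 'b set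
     \<Rightarrow> (('a,'k::field) ncpoly \<Rightarrow> ('a,'k) ncpoly)
     \<Rightarrow> (('a,'b,'k) fmodel \<Rightarrow> ('a,'b,'k) fmodel) \<Rightarrow> bool" where
  "rep_hom X Y X' Y' \<phi> \<psi> \<longleftrightarrow>
     lie_hom_on X X' \<phi> \<and> lin_on_fmod X Y X' Y' \<psi> \<and>
     (\<forall>l\<in>lie_elems X. \<forall>v\<in>fmod X Y. fm_act (\<phi> l) (\<psi> v) = \<psi> (fm_act l v))"

type_synonym ('a,'b) xobj = "'a set \<times> 'b set"
type_synonym ('a,'b,'k) xmor =
  "('a,'b) xobj \<times> ('a,'b) xobj \<times> (('a,'k) ncpoly \<Rightarrow> ('a,'k) ncpoly)
     \<times> (('a,'b,'k) fmodel \<Rightarrow> ('a,'b,'k) fmodel)"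

text \<open>Objects: W(X,Y) for finite X \<subseteq> X0, Y \<subseteq> Y0, identified with the pair (X,Y).\<close>
definition xi_obj :: "'a set \<Rightarrow> 'b set \<Rightarrow> ('a,'b) xobj set" where
  "xi_obj X0 Y0 = {(X, Y). finite X \<and> X \<subseteq> X0 \<and> finite Y \<and> Y \<subseteq> Y0}"

definition xi_hom :: "'a set \<Rightarrow> 'b set \<Rightarrow> ('a,'b) xobj \<Rightarrow> ('a,'b) xobj \<Rightarrow> ('a,'b,'k::field) xmor set" where
  "xi_hom X0 Y0 A B = {(A', B', \<phi>, \<psi>). A' = A \<and> B' = B \<and> A \<in> xi_obj X0 Y0 \<and> B \<in> xi_obj X0 Y0 \<and>
       rep_hom (fst A) (snd A) (fst B) (snd B) \<phi> \<psi>}"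

definition xi_mor :: "'a set \<Rightarrow> 'b set \<Rightarrow> ('a,'b,'k::field) xmor set" where
  "xi_mor X0 Y0 = (\<Union>A\<in>xi_obj X0 Y0. \<Union>B\<in>xi_obj X0 Y0. xi_hom X0 Y0 A B)"

definition xi_id :: "('a,'b) xobj \<Rightarrow> ('a,'b,'k::field) xmor" where
  "xi_id A = (A, A, (\<lambda>p. if p \<in> lie_elems (fst A) then p else nc_zero),
                    (\<lambda>m. if m \<in> fmod (fst A) (snd A) then m else fm_zero))"

text \<open>\<open>xi_comp g f\<close> is g \<circ> f (first f, then g).\<close>
definition xi_comp :: "('a,'b,'k::field) xmor \<Rightarrow> ('a,'b,'k) xmor \<Rightarrow> ('a,'b,'k) xmor" where
  "xi_comp g f = (case f of (A, B, \<phi>, \<psi>) \<Rightarrow> case g of (B', C, \<phi>', \<psi>') \<Rightarrow>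
                   (A, C, \<phi>' \<circ> \<phi>, \<psi>' \<circ> \<psi>))"

definition xi_functor :: "'a set \<Rightarrow> 'b set
     \<Rightarrow> (('a,'b) xobj \<Rightarrow> ('a,'b) xobj) \<Rightarrow> (('a,'b,'k::field) xmor \<Rightarrow> ('a,'b,'k) xmor) \<Rightarrow> bool" where
  "xi_functor X0 Y0 Fo Fm \<longleftrightarrow>
     (\<forall>A\<in>xi_obj X0 Y0. Fo A \<in> xi_obj X0 Y0) \<and>
     (\<forall>A\<in>xi_obj X0 Y0. \<forall>B\<in>xi_obj X0 Y0. \<forall>f\<in>xi_hom X0 Y0 A B. Fm f \<in> xi_hom X0 Y0 (Fo A) (Fo B)) \<and>
     (\<forall>A\<in>xi_obj X0 Y0. Fm (xi_id A) = xi_id (Fo A)) \<and>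
     (\<forall>A\<in>xi_obj X0 Y0. \<forall>B\<in>xi_obj X0 Y0. \<forall>C\<in>xi_obj X0 Y0.
        \<forall>f\<in>xi_hom X0 Y0 A B. \<forall>g\<in>xi_hom X0 Y0 B C.
          Fm (xi_comp g f) = xi_comp (Fm g) (Fm f))"

definition xi_automorphism :: "'a set \<Rightarrow> 'b set
     \<Rightarrow> (('a,'b) xobj \<Rightarrow> ('a,'b) xobj) \<Rightarrow> (('a,'b,'k::field) xmor \<Rightarrow> ('a,'b,'k) xmor) \<Rightarrow> bool" where
  "xi_automorphism X0 Y0 Fo Fm \<longleftrightarrow>
     xi_functor X0 Y0 Fo Fm \<and>
     (\<exists>Go Gm. xi_functor X0 Y0 Go Gm \<and>
        (\<forall>A\<in>xi_obj X0 Y0. Go (Fo A) = A \<and> Fo (Go A) = A) \<and>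
        (\<forall>f\<in>(xi_mor X0 Y0 :: ('a,'b,'k) xmor set). Gm (Fm f) = f \<and> Fm (Gm f) = f))"

definition cyclic :: "('a,'b) xobj \<Rightarrow> bool" where
  "cyclic A \<longleftrightarrow> (\<exists>x y. A = ({x}, {y}))"

end

theory Submission
  imports Defs
begin


lemma lie_const: "p \<in> lie_elems X \<Longrightarrow> p [] = 0"
  by (induction rule: lie_elems.induct)
     (auto simp: nc_gen_def nc_zero_def nc_add_def nc_scale_def nc_bracket_def nc_mult_def)

lemma lie_bracket_single: "p \<in> lie_elems X \<Longrightarrow> q \<in> lie_elems X \<Longrightarrow> nc_bracket p q [a] = 0"
  by (simp add: nc_bracket_def nc_mult_def lie_const)

lemma nc_bracket_zero[simp]: "nc_bracket nc_zero nc_zero = nc_zero"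
  by (simp add: nc_bracket_def nc_mult_def nc_zero_def fun_eq_iff)

lemma nc_add_zero[simp]: "nc_add nc_zero nc_zero = nc_zero"
  by (simp add: nc_add_def nc_zero_def)

lemma nc_scale_zero[simp]: "nc_scale c nc_zero = nc_zero"
  by (simp add: nc_scale_def nc_zero_def)

lemma nc_scale_0[simp]: "nc_scale 0 p = nc_zero"
  by (simp add: nc_scale_def nc_zero_def)

lemma lie_empty: "lie_elems {} = {nc_zero}"
proof -
  have "p \<in> lie_elems {} \<Longrightarrow> p = nc_zero" for p :: "('a,'k::field) ncpoly"
    by (induction rule: lie_elems.induct) auto
  then show ?thesis using lie_elems.zero by blast
qed

lemma bracket_scales: "nc_bracket (nc_scale a g) (nc_scale b g) = nc_zero"
proof -
  have "nc_mult (nc_scale a g) (nc_scale b g) = nc_mult (nc_scale b g) (nc_scale a g)"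
    by (simp add: nc_mult_def nc_scale_def mult_ac)
  then show ?thesis by (simp add: nc_bracket_def nc_zero_def fun_eq_iff)
qed

lemma lie_single: "lie_elems {x} = range (\<lambda>c. nc_scale c (nc_gen x))"
proof -
  have "p \<in> lie_elems {x} \<Longrightarrow> \<exists>c. p = nc_scale c (nc_gen x)" for p :: "('a,'k::field) ncpoly"
  proof (induction rule: lie_elems.induct)
    case (gen y) then show ?case by (rule_tac x=1 in exI) (simp add: nc_scale_def)
  next
    case zero then show ?case by (rule_tac x=0 in exI) simp
  next
    case (add p q)
    then obtain a b where "p = nc_scale a (nc_gen x)" "q = nc_scale b (nc_gen x)" by blast
    then show ?case
      by (intro exI[of _ "a + b"]) (simp add: nc_add_def nc_scale_def fun_eq_iff distrib_right)
  next
    case (scale p c)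
    then obtain a where "p = nc_scale a (nc_gen x)" by blast
    then show ?case
      by (intro exI[of _ "c * a"]) (simp add: nc_scale_def fun_eq_iff)
  next
    case (bracket p q) then show ?case
      using bracket_scales by (metis nc_scale_0)
  qed
  moreover have "nc_scale c (nc_gen x) \<in> lie_elems {x}" for c :: "'k::field"
    by (intro lie_elems.intros) auto
  ultimately show ?thesis by blast
qed

lemma nc_gen_at[simp]: "nc_gen x [x] = 1" "nc_gen x [] = 0"
  by (auto simp: nc_gen_def)

lemma nc_gen_nz: "nc_gen x \<noteq> nc_zero"
  by (metis nc_gen_at(1) nc_zero_def one_neq_zero)

lemma lie_mono: "p \<in> lie_elems X \<Longrightarrow> X \<subseteq> X' \<Longrightarrow> p \<in> lie_elems X'"
  by (induction rule: lie_elems.induct) (auto intro: lie_elems.intros)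


lemma sum_nz_ex: "sum f A \<noteq> 0 \<Longrightarrow> \<exists>i\<in>A. f i \<noteq> 0"
  by (meson sum.neutral)

lemma nc_mult_ncpolys: "p \<in> ncpolys X \<Longrightarrow> q \<in> ncpolys X \<Longrightarrow> nc_mult p q \<in> ncpolys X"
proof -
  assume p: "p \<in> ncpolys X" and q: "q \<in> ncpolys X"
  let ?S = "(\<lambda>(u,v). u @ v) ` ({u. p u \<noteq> 0} \<times> {v. q v \<noteq> 0})"
  have sub: "{w. nc_mult p q w \<noteq> 0} \<subseteq> ?S"
  proof
    fix w assume "w \<in> {w. nc_mult p q w \<noteq> 0}"
    then have "(\<Sum>i\<le>length w. p (take i w) * q (drop i w)) \<noteq> 0" by (simp add: nc_mult_def)
    from sum_nz_ex[OF this] obtain i where "i \<le> length w" "p (take i w) * q (drop i w) \<noteq> 0"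
      by auto
    then show "w \<in> ?S"
      by (intro image_eqI[of _ _ "(take i w, drop i w)"]) auto
  qed
  have fin: "finite ?S" using p q unfolding ncpolys_def by simp
  have "set w \<subseteq> X" if "nc_mult p q w \<noteq> 0" for w
  proof -
    from sub that have "w \<in> ?S" by blast
    then obtain u v where "w = u @ v" "p u \<noteq> 0" "q v \<noteq> 0" by auto
    then show ?thesis using p q unfolding ncpolys_def by auto
  qed
  then show ?thesis using finite_subset[OF sub fin] by (auto simp: ncpolys_def)
qed

lemma ncpolys_sub:
  assumes "\<And>w. r w \<noteq> 0 \<Longrightarrow> p w \<noteq> 0 \<or> q w \<noteq> 0" "p \<in> ncpolys X" "q \<in> ncpolys X"
  shows "r \<in> ncpolys X"
proof -
  have s: "{w. r w \<noteq> 0} \<subseteq> {w. p w \<noteq> 0} \<union> {w. q w \<noteq> 0}" using assms(1) by blast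
  have "finite {w. r w \<noteq> 0}" using assms(2,3) by (intro finite_subset[OF s]) (auto simp: ncpolys_def)
  moreover have "set w \<subseteq> X" if "r w \<noteq> 0" for w
    using assms(1)[OF that] assms(2,3) unfolding ncpolys_def by blast
  ultimately show ?thesis unfolding ncpolys_def by blast
qed

lemma fmod_sub:
  assumes "\<And>w. r w \<noteq> 0 \<Longrightarrow> p w \<noteq> 0 \<or> q w \<noteq> 0" "p \<in> fmod X Y" "q \<in> fmod X Y"
  shows "r \<in> fmod X Y"
proof -
  have s: "{w. r w \<noteq> 0} \<subseteq> {w. p w \<noteq> 0} \<union> {w. q w \<noteq> 0}" using assms(1) by blast
  have "finite {w. r w \<noteq> 0}" using assms(2,3) by (intro finite_subset[OF s]) (auto simp: fmod_def)
  moreover have "set w \<subseteq> X \<and> y \<in> Y" if "r (w,y) \<noteq> 0" for w y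
    using assms(1)[OF that] assms(2,3) unfolding fmod_def by blast
  ultimately show ?thesis unfolding fmod_def by blast
qed

lemma nc_add_ncpolys: "p \<in> ncpolys X \<Longrightarrow> q \<in> ncpolys X \<Longrightarrow> nc_add p q \<in> ncpolys X"
  by (rule ncpolys_sub[of _ p q]) (auto simp: nc_add_def)

lemma lie_ncpolys: "p \<in> lie_elems X \<Longrightarrow> p \<in> ncpolys X"
proof (induction rule: lie_elems.induct)
  case (gen x)
  have s: "{w. nc_gen x w \<noteq> (0::'b)} \<subseteq> {[x]}" by (auto simp: nc_gen_def)
  have "finite {w. nc_gen x w \<noteq> (0::'b)}" by (rule finite_subset[OF s]) simp
  moreover have "set w \<subseteq> X" if "nc_gen x w \<noteq> (0::'b)" for w
    using that gen by (simp add: nc_gen_def split: if_splits)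
  ultimately show ?case unfolding ncpolys_def by blast
next
  case zero then show ?case by (simp add: ncpolys_def nc_zero_def)
next
  case (add p q) then show ?case by (simp add: nc_add_ncpolys)
next
  case (scale p c)
  show ?case by (rule ncpolys_sub[of _ p p, OF _ scale.IH scale.IH]) (auto simp: nc_scale_def)
next
  case (bracket p q)
  have a: "nc_mult p q \<in> ncpolys X" "nc_mult q p \<in> ncpolys X"
    using bracket.IH nc_mult_ncpolys by blast+
  show ?case by (rule ncpolys_sub[OF _ a]) (auto simp: nc_bracket_def)
qed

lemma fm_zero_fmod[simp]: "fm_zero \<in> fmod X Y"
  by (simp add: fmod_def fm_zero_def)

lemma fm_add_fmod: "m \<in> fmod X Y \<Longrightarrow> n \<in> fmod X Y \<Longrightarrow> fm_add m n \<in> fmod X Y"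
  by (rule fmod_sub[of _ m n]) (auto simp: fm_add_def)

lemma fm_scale_fmod: "m \<in> fmod X Y \<Longrightarrow> fm_scale c m \<in> fmod X Y"
  by (rule fmod_sub[of _ m m]) (auto simp: fm_scale_def)

lemma fm_act_fmod: "p \<in> ncpolys X \<Longrightarrow> m \<in> fmod X Y \<Longrightarrow> fm_act p m \<in> fmod X Y"
proof -
  assume p: "p \<in> ncpolys X" and m: "m \<in> fmod X Y"
  let ?S = "(\<lambda>(u,(v,y)). (u @ v, y)) ` ({u. p u \<noteq> 0} \<times> {vy. m vy \<noteq> 0})"
  have sub: "{wy. fm_act p m wy \<noteq> 0} \<subseteq> ?S"
  proof
    fix wy assume "wy \<in> {wy. fm_act p m wy \<noteq> 0}"
    then obtain w y where wy: "wy = (w,y)" "fm_act p m (w,y) \<noteq> 0" by (cases wy) auto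
    then have "(\<Sum>i\<le>length w. p (take i w) * m (drop i w, y)) \<noteq> 0" by (simp add: fm_act_def)
    from sum_nz_ex[OF this] obtain i where "i \<le> length w" "p (take i w) * m (drop i w, y) \<noteq> 0"
      by auto
    then show "wy \<in> ?S" unfolding wy
      by (intro image_eqI[of _ _ "(take i w, (drop i w, y))"]) auto
  qed
  have fin: "finite ?S" using p m unfolding ncpolys_def fmod_def by simp
  have "set w \<subseteq> X \<and> y \<in> Y" if "fm_act p m (w,y) \<noteq> 0" for w y
  proof -
    from sub that have "(w,y) \<in> ?S" by blast
    then obtain u v where "w = u @ v" "p u \<noteq> 0" "m (v,y) \<noteq> 0" by auto
    then show ?thesis using p m unfolding ncpolys_def fmod_def by auto
  qed
  then show ?thesis using finite_subset[OF sub fin] by (auto simp: fmod_def)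
qed

lemma fm_act_zero1[simp]: "fm_act nc_zero m = fm_zero"
  unfolding fm_act_def nc_zero_def fm_zero_def by (rule ext) (simp split: prod.split)

lemma fm_act_zero2[simp]: "fm_act p fm_zero = fm_zero"
  unfolding fm_act_def fm_zero_def by (rule ext) (simp split: prod.split)

lemma fm_act_const: "fm_act p m ([], y) = p [] * m ([], y)"
  by (simp add: fm_act_def)

lemma fmod_empty: "fmod X {} = {fm_zero}"
  unfolding fmod_def fm_zero_def by (auto simp: fun_eq_iff)

lemma fmod_mono: "m \<in> fmod X Y \<Longrightarrow> X \<subseteq> X' \<Longrightarrow> m \<in> fmod X' Y"
  by (auto simp: fmod_def)

definition dl :: "'b \<Rightarrow> ('a,'b,'k::field) fmodel" where
  "dl y = (\<lambda>(w,z). if w = [] \<and> z = y then 1 else 0)"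

lemma dl_fmod:
  assumes "y \<in> Y" shows "(dl y :: ('a,'b,'k::field) fmodel) \<in> fmod X Y"
proof -
  have s: "{wy. (dl y :: ('a,'b,'k) fmodel) wy \<noteq> 0} \<subseteq> {([],y)}" by (auto simp: dl_def split: if_splits)
  have "finite {wy. (dl y :: ('a,'b,'k) fmodel) wy \<noteq> 0}" by (rule finite_subset[OF s]) simp
  then show ?thesis using assms by (auto simp: fmod_def dl_def)
qed

lemma dl_at[simp]: "dl y ([], y) = 1" "z \<noteq> y \<Longrightarrow> dl y ([], z) = 0"
  by (auto simp: dl_def)

lemma dl_nz: "dl y \<noteq> fm_zero"
  by (metis dl_at(1) fm_zero_def one_neq_zero)

lemma fmod_single: "fmod {} {y} = range (\<lambda>c. fm_scale c (dl y))"
proof -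
  have "m = fm_scale (m ([],y)) (dl y)" if m: "m \<in> fmod {} {y}" for m :: "('a,'b,'k::field) fmodel"
  proof (rule ext)
    fix wz :: "'a list \<times> 'b"
    obtain w z where wz: "wz = (w,z)" by (cases wz)
    show "m wz = fm_scale (m ([],y)) (dl y) wz"
    proof (cases "w = [] \<and> z = y")
      case True then show ?thesis by (simp add: wz fm_scale_def)
    next
      case False
      then have "m (w,z) = 0" using m unfolding fmod_def by auto
      then show ?thesis using False by (auto simp: wz fm_scale_def dl_def)
    qed
  qed
  moreover have "fm_scale c (dl y) \<in> fmod {} {y}" for c :: "'k::field"
    by (simp add: fm_scale_fmod dl_fmod)
  ultimately show ?thesis by blast
qed




lemma gen_sum: "(\<Sum>i\<le>length w. (nc_gen x (take i w) :: 'k::field) * f (drop i w)) =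
   (case w of [] \<Rightarrow> 0 | a # w' \<Rightarrow> if a = x then f w' else 0)"
proof (cases w)
  case Nil then show ?thesis by (simp add: nc_gen_def)
next
  case (Cons a w')
  have "(\<Sum>i\<le>length w. (nc_gen x (take i w) :: 'k) * f (drop i w)) =
        (\<Sum>i\<le>length w'. (nc_gen x (a # take i w') :: 'k) * f (drop i w'))"
    unfolding Cons length_Cons sum.atMost_Suc_shift by simp
  also have "\<dots> = (\<Sum>i\<le>length w'. if i = 0 then (if a = x then f w' else 0) else 0)"
    by (rule sum.cong) (auto simp: nc_gen_def)
  also have "\<dots> = (if a = x then f w' else 0)" by simp
  finally show ?thesis using Cons by simp
qed

lemma decomp:
  assumes m: "m \<in> fmod {x} {y}"
  defines "m' \<equiv> (\<lambda>(w,z). m (x # w, z))"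
  shows "m' \<in> fmod {x} {y}"
    and "m = fm_add (fm_scale (m ([],y)) (dl y)) (fm_act (nc_gen x) m')"
proof -
  let ?S = "(\<lambda>(w,z). (tl w, z)) ` {wz. m wz \<noteq> 0}"
  have s: "{wz. m' wz \<noteq> 0} \<subseteq> ?S"
  proof
    fix wz assume "wz \<in> {wz. m' wz \<noteq> 0}"
    then obtain w z where "wz = (w,z)" "m (x # w, z) \<noteq> 0" unfolding m'_def by (cases wz) auto
    then show "wz \<in> ?S" by (intro image_eqI[of _ _ "(x#w, z)"]) auto
  qed
  have "finite ?S" using m unfolding fmod_def by simp
  then have "finite {wz. m' wz \<noteq> 0}" by (rule finite_subset[OF s])
  moreover have "set w \<subseteq> {x} \<and> z \<in> {y}" if "m' (w,z) \<noteq> 0" for w z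
  proof -
    have "m (x#w, z) \<noteq> 0" using that by (simp add: m'_def)
    then have "set (x#w) \<subseteq> {x} \<and> z \<in> {y}" using m unfolding fmod_def by blast
    then show ?thesis by auto
  qed
  ultimately show "m' \<in> fmod {x} {y}" unfolding fmod_def by blast
  show "m = fm_add (fm_scale (m ([],y)) (dl y)) (fm_act (nc_gen x) m')"
  proof (rule ext)
    fix wz :: "'a list \<times> 'b"
    obtain w z where wz: "wz = (w,z)" by (cases wz)
    have act: "fm_act (nc_gen x) m' (w,z) = (case w of [] \<Rightarrow> 0 | a # w' \<Rightarrow> if a = x then m (x # w', z) else 0)"
      unfolding fm_act_def using gen_sum[where w=w and x=x and f="\<lambda>v. m' (v,z)"] by (cases w) (simp_all add: m'_def)
    show "m wz = fm_add (fm_scale (m ([],y)) (dl y)) (fm_act (nc_gen x) m') wz"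
    proof (cases w)
      case Nil
      then show ?thesis using m act unfolding fmod_def
        by (cases "z = y") (auto simp: wz fm_add_def fm_scale_def dl_def)
    next
      case (Cons a w')
      show ?thesis
      proof (cases "a = x")
        case True then show ?thesis using act Cons by (simp add: wz fm_add_def fm_scale_def dl_def)
      next
        case False
        have "m (w,z) = 0"
        proof (rule ccontr)
          assume "m (w,z) \<noteq> 0"
          then have "set w \<subseteq> {x}" using m unfolding fmod_def by blast
          then show False using Cons False by simp
        qed
        then show ?thesis using act Cons False by (simp add: wz fm_add_def fm_scale_def dl_def)
      qed
    qed
  qed
qed

lemma lie_hom_zero: "lie_hom_on X X' \<phi> \<Longrightarrow> \<phi> nc_zero = nc_zero"
  unfolding lie_hom_on_def using lie_elems.zero[of X]
  by (metis nc_scale_0 nc_scale_zero)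

lemma lin_zero: "lin_on_fmod X Y X' Y' \<psi> \<Longrightarrow> \<psi> fm_zero = fm_zero"
proof -
  assume a: "lin_on_fmod X Y X' Y' \<psi>"
  have "fm_scale 0 fm_zero = (fm_zero :: ('a,'b,'k::field) fmodel)" by (simp add: fm_scale_def fm_zero_def)
  moreover have "fm_scale 0 m = (fm_zero :: ('a,'b,'k::field) fmodel)" for m by (simp add: fm_scale_def fm_zero_def)
  ultimately show ?thesis using a unfolding lin_on_fmod_def by (metis fm_zero_fmod)
qed


lemma phi_triv:
  assumes "lie_hom_on X X' \<phi>" "X = {} \<or> X' = {}"
  shows "\<phi> = (\<lambda>_. nc_zero)"
proof
  fix p
  show "\<phi> p = nc_zero"
  proof (cases "p \<in> lie_elems X")
    case True
    show ?thesis
    proof (cases "X = {}")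
      case True
      then have "p = nc_zero" using \<open>p \<in> lie_elems X\<close> lie_empty by blast
      then show ?thesis using lie_hom_zero[OF assms(1)] by simp
    next
      case False
      then have "X' = {}" using assms(2) by blast
      then show ?thesis using assms(1) True lie_empty unfolding lie_hom_on_def by blast
    qed
  next
    case False then show ?thesis using assms(1) unfolding lie_hom_on_def by blast
  qed
qed

lemma psi_triv:
  assumes "lin_on_fmod X Y X' Y' \<psi>" "Y = {} \<or> Y' = {}"
  shows "\<psi> = (\<lambda>_. fm_zero)"
proof
  fix m
  show "\<psi> m = fm_zero"
  proof (cases "m \<in> fmod X Y")
    case True
    show ?thesis
    proof (cases "Y = {}")
      case True
      then have "m = fm_zero" using \<open>m \<in> fmod X Y\<close> fmod_empty by blast
      then show ?thesis using lin_zero[OF assms(1)] by simp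
    next
      case False
      then have "Y' = {}" using assms(2) by blast
      then show ?thesis using assms(1) True fmod_empty unfolding lin_on_fmod_def by blast
    qed
  next
    case False then show ?thesis using assms(1) unfolding lin_on_fmod_def by blast
  qed
qed

lemma fm_add_zero[simp]: "fm_add fm_zero fm_zero = fm_zero"
  by (simp add: fm_add_def fm_zero_def)

lemma fm_scale_zero[simp]: "fm_scale c fm_zero = fm_zero"
  by (simp add: fm_scale_def fm_zero_def)

lemma zero_rep_hom: "rep_hom X Y X' Y' (\<lambda>_. nc_zero) (\<lambda>_. fm_zero)"
  unfolding rep_hom_def lie_hom_on_def lin_on_fmod_def
  by (simp add: lie_elems.zero)

definition phiab :: "'a set \<Rightarrow> 'a \<Rightarrow> 'a \<Rightarrow> ('a,'k::field) ncpoly \<Rightarrow> ('a,'k) ncpoly" where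
  "phiab X x x' p = (if p \<in> lie_elems X then nc_scale (p [x]) (nc_gen x') else nc_zero)"

lemma phiab_hom:
  assumes "x' \<in> X'"
  shows "lie_hom_on X X' (phiab X x x' :: ('a,'k::field) ncpoly \<Rightarrow> _)"
  unfolding lie_hom_on_def
proof (intro conjI ballI allI impI)
  fix p :: "('a,'k) ncpoly" assume "p \<in> lie_elems X"
  show "phiab X x x' p \<in> lie_elems X'"
    using assms by (simp add: phiab_def lie_elems.intros)
next
  fix p :: "('a,'k) ncpoly" assume "p \<notin> lie_elems X"
  then show "phiab X x x' p = nc_zero" by (simp add: phiab_def)
next
  fix p q :: "('a,'k) ncpoly" assume "p \<in> lie_elems X" "q \<in> lie_elems X"
  then have e: "phiab X x x' (nc_add p q) = nc_scale (nc_add p q [x]) (nc_gen x')"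
     "phiab X x x' p = nc_scale (p [x]) (nc_gen x')" "phiab X x x' q = nc_scale (q [x]) (nc_gen x')"
    by (simp_all add: phiab_def lie_elems.intros)
  show "phiab X x x' (nc_add p q) = nc_add (phiab X x x' p) (phiab X x x' q)"
    unfolding e by (simp add: nc_add_def nc_scale_def fun_eq_iff distrib_right)
next
  fix c and p :: "('a,'k) ncpoly" assume "p \<in> lie_elems X"
  then have e: "phiab X x x' (nc_scale c p) = nc_scale (nc_scale c p [x]) (nc_gen x')"
     "phiab X x x' p = nc_scale (p [x]) (nc_gen x')"
    by (simp_all add: phiab_def lie_elems.intros)
  show "phiab X x x' (nc_scale c p) = nc_scale c (phiab X x x' p)"
    unfolding e by (simp add: nc_scale_def fun_eq_iff)
next
  fix p q :: "('a,'k) ncpoly" assume pq: "p \<in> lie_elems X" "q \<in> lie_elems X"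
  then have "nc_bracket p q [x] = 0" by (rule lie_bracket_single)
  then show "phiab X x x' (nc_bracket p q) = nc_bracket (phiab X x x' p) (phiab X x x' q)"
    using pq by (simp add: phiab_def lie_elems.intros bracket_scales)
qed

lemma phiab_rep_hom:
  assumes "x' \<in> X'"
  shows "rep_hom X Y X' Y' (phiab X x x' :: ('a,'k::field) ncpoly \<Rightarrow> _) (\<lambda>_. fm_zero)"
proof -
  have "lie_hom_on X X' (phiab X x x' :: ('a,'k::field) ncpoly \<Rightarrow> _)" by (rule phiab_hom[OF assms])
  moreover have "lin_on_fmod X Y X' Y' (\<lambda>_. fm_zero :: ('a,'b,'k) fmodel)"
    using zero_rep_hom[of X Y X' Y'] unfolding rep_hom_def by blast
  ultimately show ?thesis unfolding rep_hom_def by simp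
qed

definition psic :: "'a set \<Rightarrow> 'b set \<Rightarrow> 'b \<Rightarrow> 'b \<Rightarrow> ('a,'b,'k::field) fmodel \<Rightarrow> ('a,'b,'k) fmodel" where
  "psic X Y y y' m = (if m \<in> fmod X Y then fm_scale (m ([],y)) (dl y') else fm_zero)"

lemma psic_compat:
  assumes l: "l \<in> lie_elems X" and v: "v \<in> fmod X Y"
  shows "psic X Y y y' (fm_act l v) = fm_zero"
proof -
  have a: "fm_act l v \<in> fmod X Y" using fm_act_fmod[OF lie_ncpolys[OF l] v] .
  have "fm_act l v ([], y) = 0" by (simp add: fm_act_const lie_const[OF l])
  then show ?thesis using a by (simp add: psic_def fm_scale_def fm_zero_def)
qed

lemma psic_rep_hom:
  assumes "y' \<in> Y'"
  shows "rep_hom X Y X' Y' (\<lambda>_. nc_zero) (psic X Y y y' :: ('a,'b,'k::field) fmodel \<Rightarrow> _)"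
  unfolding rep_hom_def
proof (intro conjI)
  show "lie_hom_on X X' (\<lambda>_. nc_zero :: ('a,'k) ncpoly)"
    using zero_rep_hom unfolding rep_hom_def by blast
  show "lin_on_fmod X Y X' Y' (psic X Y y y' :: ('a,'b,'k) fmodel \<Rightarrow> _)"
    unfolding lin_on_fmod_def
  proof (intro conjI ballI allI impI)
    fix m :: "('a,'b,'k) fmodel" assume "m \<in> fmod X Y"
    then show "psic X Y y y' m \<in> fmod X' Y'"
      using assms by (simp add: psic_def fm_scale_fmod dl_fmod)
  next
    fix m :: "('a,'b,'k) fmodel" assume "m \<notin> fmod X Y"
    then show "psic X Y y y' m = fm_zero" by (simp add: psic_def)
  next
    fix m n :: "('a,'b,'k) fmodel" assume "m \<in> fmod X Y" "n \<in> fmod X Y"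
    then have e: "psic X Y y y' (fm_add m n) = fm_scale (fm_add m n ([],y)) (dl y')"
       "psic X Y y y' m = fm_scale (m ([],y)) (dl y')" "psic X Y y y' n = fm_scale (n ([],y)) (dl y')"
      by (simp_all add: psic_def fm_add_fmod)
    show "psic X Y y y' (fm_add m n) = fm_add (psic X Y y y' m) (psic X Y y y' n)"
      unfolding e by (simp add: fm_add_def fm_scale_def fun_eq_iff distrib_right)
  next
    fix c and m :: "('a,'b,'k) fmodel" assume "m \<in> fmod X Y"
    then have e: "psic X Y y y' (fm_scale c m) = fm_scale (fm_scale c m ([],y)) (dl y')"
       "psic X Y y y' m = fm_scale (m ([],y)) (dl y')"
      by (simp_all add: psic_def fm_scale_fmod)
    show "psic X Y y y' (fm_scale c m) = fm_scale c (psic X Y y y' m)"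
      unfolding e by (simp add: fm_scale_def fun_eq_iff)
  qed
  show "\<forall>l\<in>lie_elems X. \<forall>v\<in>fmod X Y. fm_act nc_zero (psic X Y y y' (v::('a,'b,'k) fmodel)) = psic X Y y y' (fm_act l v)"
    using psic_compat by (metis fm_act_zero1)
qed


definition Tr :: "'k::field itself \<Rightarrow> 'a set \<Rightarrow> 'b set \<Rightarrow> ('a,'b) xobj \<Rightarrow> ('a,'b) xobj \<Rightarrow> bool" where
  "Tr K X0 Y0 A B \<longleftrightarrow> (\<forall>f\<in>(xi_hom X0 Y0 A B :: ('a,'b,'k) xmor set). \<forall>g\<in>xi_hom X0 Y0 A B. f = g)"

definition Zr :: "'k::field itself \<Rightarrow> 'a set \<Rightarrow> 'b set \<Rightarrow> ('a,'b) xobj \<Rightarrow> bool" where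
  "Zr K X0 Y0 A \<longleftrightarrow> Tr K X0 Y0 A A"

definition Rt :: "'k::field itself \<Rightarrow> 'a set \<Rightarrow> 'b set \<Rightarrow> ('a,'b) xobj \<Rightarrow> ('a,'b) xobj \<Rightarrow> bool" where
  "Rt K X0 Y0 Z A \<longleftrightarrow> (\<exists>s\<in>(xi_hom X0 Y0 Z A :: ('a,'b,'k) xmor set). \<exists>r\<in>xi_hom X0 Y0 A Z. xi_comp r s = xi_id Z)"

definition Bt :: "'k::field itself \<Rightarrow> 'a set \<Rightarrow> 'b set \<Rightarrow> ('a,'b) xobj \<Rightarrow> bool" where
  "Bt K X0 Y0 A \<longleftrightarrow> \<not> Zr K X0 Y0 A \<and> (\<forall>B\<in>xi_obj X0 Y0. Tr K X0 Y0 A B \<longrightarrow> Zr K X0 Y0 B)"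

definition Sm :: "'k::field itself \<Rightarrow> 'a set \<Rightarrow> 'b set \<Rightarrow> ('a,'b) xobj \<Rightarrow> bool" where
  "Sm K X0 Y0 Z \<longleftrightarrow> (\<forall>W\<in>xi_obj X0 Y0. \<forall>s\<in>(xi_hom X0 Y0 W Z :: ('a,'b,'k) xmor set). \<forall>r\<in>xi_hom X0 Y0 Z W.
      xi_comp r s = xi_id W \<longrightarrow> Zr K X0 Y0 W \<or> xi_comp s r = xi_id Z)"

definition Pc :: "'k::field itself \<Rightarrow> 'a set \<Rightarrow> 'b set \<Rightarrow> ('a,'b) xobj \<Rightarrow> bool" where
  "Pc K X0 Y0 A \<longleftrightarrow> Bt K X0 Y0 A \<and>
     (\<forall>Z\<in>xi_obj X0 Y0. Rt K X0 Y0 Z A \<and> \<not> Zr K X0 Y0 Z \<and> \<not> Bt K X0 Y0 Z \<longrightarrow> Sm K X0 Y0 Z)"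

lemma xi_hom_iff: "f \<in> xi_hom X0 Y0 A B \<longleftrightarrow> (\<exists>\<phi> \<psi>. f = (A,B,\<phi>,\<psi>) \<and> A \<in> xi_obj X0 Y0 \<and> B \<in> xi_obj X0 Y0 \<and>
    rep_hom (fst A) (snd A) (fst B) (snd B) \<phi> \<psi>)"
  by (auto simp: xi_hom_def)

lemma Tr_iff:
  assumes A: "(X,Y) \<in> xi_obj X0 Y0" and B: "(X',Y') \<in> xi_obj X0 Y0"
  shows "Tr (K::'k::field itself) X0 Y0 (X,Y) (X',Y') \<longleftrightarrow> (X = {} \<or> X' = {}) \<and> (Y = {} \<or> Y' = {})"
proof
  assume T: "Tr K X0 Y0 (X,Y) (X',Y')"
  let ?f0 = "((X,Y),(X',Y'),(\<lambda>_. nc_zero),(\<lambda>_. fm_zero)) :: ('a,'b,'k) xmor"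
  have f0: "?f0 \<in> xi_hom X0 Y0 (X,Y) (X',Y')"
    using A B zero_rep_hom by (simp add: xi_hom_def)
  have X: "X = {} \<or> X' = {}"
  proof (rule ccontr)
    assume "\<not> (X = {} \<or> X' = {})"
    then obtain x x' where x: "x \<in> X" "x' \<in> X'" by blast
    let ?f1 = "((X,Y),(X',Y'),phiab X x x',(\<lambda>_. fm_zero)) :: ('a,'b,'k) xmor"
    have f1: "?f1 \<in> xi_hom X0 Y0 (X,Y) (X',Y')"
      using A B phiab_rep_hom[OF x(2)] by (simp add: xi_hom_def)
    have e1: "phiab X x x' (nc_gen x) = (nc_scale 1 (nc_gen x') :: ('a,'k) ncpoly)"
      using x by (simp add: phiab_def lie_elems.gen)
    have e2: "(nc_scale 1 (nc_gen x') :: ('a,'k) ncpoly) \<noteq> nc_zero" using nc_gen_nz by (simp add: nc_scale_def)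
    have "(\<lambda>_. nc_zero) \<noteq> (phiab X x x' :: ('a,'k) ncpoly \<Rightarrow> _)" using e1 e2 by metis
    then have ne: "?f0 \<noteq> ?f1" by simp
    have all: "\<forall>f\<in>xi_hom X0 Y0 (X,Y) (X',Y'). \<forall>g\<in>xi_hom X0 Y0 (X,Y) (X',Y'). f = (g::('a,'b,'k) xmor)"
      using T unfolding Tr_def by blast
    show False using ne bspec[OF bspec[OF all f0] f1] by (rule notE)
  qed
  have Y: "Y = {} \<or> Y' = {}"
  proof (rule ccontr)
    assume "\<not> (Y = {} \<or> Y' = {})"
    then obtain y y' where y: "y \<in> Y" "y' \<in> Y'" by blast
    let ?f2 = "((X,Y),(X',Y'),(\<lambda>_. nc_zero),psic X Y y y') :: ('a,'b,'k) xmor"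
    have f2: "?f2 \<in> xi_hom X0 Y0 (X,Y) (X',Y')"
      using A B psic_rep_hom[OF y(2)] by (simp add: xi_hom_def)
    have e1: "psic X Y y y' (dl y) = (fm_scale 1 (dl y') :: ('a,'b,'k) fmodel)"
      using y by (simp add: psic_def dl_fmod)
    have e2: "(fm_scale 1 (dl y') :: ('a,'b,'k) fmodel) \<noteq> fm_zero" using dl_nz by (simp add: fm_scale_def)
    have "(\<lambda>_. fm_zero) \<noteq> (psic X Y y y' :: ('a,'b,'k) fmodel \<Rightarrow> _)" using e1 e2 by metis
    then have ne: "?f0 \<noteq> ?f2" by simp
    have all: "\<forall>f\<in>xi_hom X0 Y0 (X,Y) (X',Y'). \<forall>g\<in>xi_hom X0 Y0 (X,Y) (X',Y'). f = (g::('a,'b,'k) xmor)"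
      using T unfolding Tr_def by blast
    show False using ne bspec[OF bspec[OF all f0] f2] by (rule notE)
  qed
  show "(X = {} \<or> X' = {}) \<and> (Y = {} \<or> Y' = {})" using X Y by blast
next
  assume e: "(X = {} \<or> X' = {}) \<and> (Y = {} \<or> Y' = {})"
  have one: "f = ((X,Y),(X',Y'),(\<lambda>_. nc_zero),(\<lambda>_. fm_zero))" if "f \<in> (xi_hom X0 Y0 (X,Y) (X',Y') :: ('a,'b,'k) xmor set)" for f
  proof -
    from that obtain \<phi> \<psi> where f: "f = ((X,Y),(X',Y'),\<phi>,\<psi>)" and r: "rep_hom X Y X' Y' \<phi> \<psi>"
      unfolding xi_hom_iff by auto
    have "\<phi> = (\<lambda>_. nc_zero)" using r e phi_triv unfolding rep_hom_def by blast
    moreover have "\<psi> = (\<lambda>_. fm_zero)" using r e psi_triv unfolding rep_hom_def by blast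
    ultimately show ?thesis using f by simp
  qed
  show "Tr K X0 Y0 (X,Y) (X',Y')" unfolding Tr_def
  proof (intro ballI)
    fix f g assume f: "f \<in> (xi_hom X0 Y0 (X,Y) (X',Y') :: ('a,'b,'k) xmor set)"
      and g: "g \<in> (xi_hom X0 Y0 (X,Y) (X',Y') :: ('a,'b,'k) xmor set)"
    show "f = g" using one[OF f] one[OF g] by (rule trans[OF _ sym])
  qed
qed

lemma Zr_iff:
  assumes A: "(X,Y) \<in> xi_obj X0 Y0"
  shows "Zr (K::'k::field itself) X0 Y0 (X,Y) \<longleftrightarrow> X = {} \<and> Y = {}"
  using Tr_iff[OF A A] unfolding Zr_def by auto

lemma Bt_iff:
  assumes A: "(X,Y) \<in> xi_obj X0 Y0" and x0: "x0 \<in> X0" and y0: "y0 \<in> Y0"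
  shows "Bt (K::'k::field itself) X0 Y0 (X,Y) \<longleftrightarrow> X \<noteq> {} \<and> Y \<noteq> {}"
proof
  assume b: "Bt K X0 Y0 (X,Y)"
  have L: "({x0},{}) \<in> xi_obj X0 Y0" and V: "({},{y0}) \<in> xi_obj X0 Y0"
    using x0 y0 by (auto simp: xi_obj_def)
  have nz: "\<not> (X = {} \<and> Y = {})" using b Zr_iff[OF A] unfolding Bt_def by blast
  show "X \<noteq> {} \<and> Y \<noteq> {}"
  proof (rule ccontr)
    assume "\<not> (X \<noteq> {} \<and> Y \<noteq> {})"
    then consider "X = {}" | "Y = {}" by blast
    then show False
    proof cases
      case 1
      then have "Tr K X0 Y0 (X,Y) ({x0},{})" using Tr_iff[OF A L] by simp
      moreover have "\<not> Zr K X0 Y0 ({x0},{})" using Zr_iff[OF L] by simp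
      ultimately show False using b L unfolding Bt_def by blast
    next
      case 2
      then have "Tr K X0 Y0 (X,Y) ({},{y0})" using Tr_iff[OF A V] by simp
      moreover have "\<not> Zr K X0 Y0 ({},{y0})" using Zr_iff[OF V] by simp
      ultimately show False using b V unfolding Bt_def by blast
    qed
  qed
next
  assume ne: "X \<noteq> {} \<and> Y \<noteq> {}"
  have "Zr K X0 Y0 B" if "B \<in> xi_obj X0 Y0" "Tr K X0 Y0 (X,Y) B" for B
  proof -
    obtain X' Y' where B: "B = (X',Y')" by (cases B)
    show ?thesis using that Tr_iff[OF A, of X' Y'] Zr_iff[of X' Y'] ne unfolding B by auto
  qed
  then show "Bt K X0 Y0 (X,Y)" using ne Zr_iff[OF A] unfolding Bt_def by auto
qed


definition isoP :: "'a set \<Rightarrow> 'b set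
     \<Rightarrow> (('a,'b) xobj \<Rightarrow> ('a,'b) xobj) \<Rightarrow> (('a,'b,'k::field) xmor \<Rightarrow> ('a,'b,'k) xmor)
     \<Rightarrow> (('a,'b) xobj \<Rightarrow> ('a,'b) xobj) \<Rightarrow> (('a,'b,'k) xmor \<Rightarrow> ('a,'b,'k) xmor) \<Rightarrow> bool" where
  "isoP X0 Y0 Fo Fm Go Gm \<longleftrightarrow> xi_functor X0 Y0 Fo Fm \<and> xi_functor X0 Y0 Go Gm \<and>
        (\<forall>A\<in>xi_obj X0 Y0. Go (Fo A) = A \<and> Fo (Go A) = A) \<and>
        (\<forall>f\<in>(xi_mor X0 Y0 :: ('a,'b,'k) xmor set). Gm (Fm f) = f \<and> Fm (Gm f) = f)"

lemma isoP_sym: "isoP X0 Y0 Fo Fm Go Gm \<Longrightarrow> isoP X0 Y0 Go Gm Fo Fm"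
  unfolding isoP_def by blast

lemma hom_mor: "f \<in> xi_hom X0 Y0 A B \<Longrightarrow> f \<in> xi_mor X0 Y0"
  unfolding xi_mor_def xi_hom_def by blast

context
  fixes X0 :: "'a set" and Y0 :: "'b set"
    and Fo Go :: "('a,'b) xobj \<Rightarrow> ('a,'b) xobj"
    and Fm Gm :: "('a,'b,'k::field) xmor \<Rightarrow> ('a,'b,'k) xmor"
    and K :: "'k itself"
  assumes iso: "isoP X0 Y0 Fo Fm Go Gm"
begin

lemma Ffun: "xi_functor X0 Y0 Fo Fm" using iso by (simp add: isoP_def)
lemma Gfun: "xi_functor X0 Y0 Go Gm" using iso by (simp add: isoP_def)
lemma inv_obj: "\<forall>A\<in>xi_obj X0 Y0. Go (Fo A) = A \<and> Fo (Go A) = A" using iso by (simp add: isoP_def)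
lemma inv_mor: "\<forall>f\<in>(xi_mor X0 Y0 :: ('a,'b,'k) xmor set). Gm (Fm f) = f \<and> Fm (Gm f) = f"
  using iso by (simp add: isoP_def)

lemma F_obj: "A \<in> xi_obj X0 Y0 \<Longrightarrow> Fo A \<in> xi_obj X0 Y0"
  using Ffun unfolding xi_functor_def by blast
lemma G_obj: "A \<in> xi_obj X0 Y0 \<Longrightarrow> Go A \<in> xi_obj X0 Y0"
  using Gfun unfolding xi_functor_def by blast
lemma GF: "A \<in> xi_obj X0 Y0 \<Longrightarrow> Go (Fo A) = A"
  using inv_obj by blast
lemma FG: "A \<in> xi_obj X0 Y0 \<Longrightarrow> Fo (Go A) = A"
  using inv_obj by blast
lemma F_hom: "A \<in> xi_obj X0 Y0 \<Longrightarrow> B \<in> xi_obj X0 Y0 \<Longrightarrow> f \<in> xi_hom X0 Y0 A B \<Longrightarrow> Fm f \<in> xi_hom X0 Y0 (Fo A) (Fo B)"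
  using Ffun unfolding xi_functor_def by blast
lemma G_hom: "A \<in> xi_obj X0 Y0 \<Longrightarrow> B \<in> xi_obj X0 Y0 \<Longrightarrow> f \<in> xi_hom X0 Y0 A B \<Longrightarrow> Gm f \<in> xi_hom X0 Y0 (Go A) (Go B)"
  using Gfun unfolding xi_functor_def by blast
lemma GFm: "f \<in> xi_hom X0 Y0 A B \<Longrightarrow> Gm (Fm f) = f"
  using inv_mor hom_mor by blast
lemma FGm: "f \<in> xi_hom X0 Y0 A B \<Longrightarrow> Fm (Gm f) = f"
  using inv_mor hom_mor by blast
lemma F_id: "A \<in> xi_obj X0 Y0 \<Longrightarrow> Fm (xi_id A) = xi_id (Fo A)"
  using Ffun unfolding xi_functor_def by blast
lemma G_id: "A \<in> xi_obj X0 Y0 \<Longrightarrow> Gm (xi_id A) = xi_id (Go A)"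
  using Gfun unfolding xi_functor_def by blast
lemma F_comp: "A \<in> xi_obj X0 Y0 \<Longrightarrow> B \<in> xi_obj X0 Y0 \<Longrightarrow> C \<in> xi_obj X0 Y0 \<Longrightarrow>
   f \<in> xi_hom X0 Y0 A B \<Longrightarrow> g \<in> xi_hom X0 Y0 B C \<Longrightarrow> Fm (xi_comp g f) = xi_comp (Fm g) (Fm f)"
  using Ffun unfolding xi_functor_def by blast
lemma G_comp: "A \<in> xi_obj X0 Y0 \<Longrightarrow> B \<in> xi_obj X0 Y0 \<Longrightarrow> C \<in> xi_obj X0 Y0 \<Longrightarrow>
   f \<in> xi_hom X0 Y0 A B \<Longrightarrow> g \<in> xi_hom X0 Y0 B C \<Longrightarrow> Gm (xi_comp g f) = xi_comp (Gm g) (Gm f)"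
  using Gfun unfolding xi_functor_def by blast

lemma Tr_mono:
  assumes A: "A \<in> xi_obj X0 Y0" and B: "B \<in> xi_obj X0 Y0" and T: "Tr K X0 Y0 A B"
  shows "Tr K X0 Y0 (Fo A) (Fo B)"
  unfolding Tr_def
proof (intro ballI)
  fix f g assume f: "f \<in> (xi_hom X0 Y0 (Fo A) (Fo B) :: ('a,'b,'k) xmor set)"
    and g: "g \<in> (xi_hom X0 Y0 (Fo A) (Fo B) :: ('a,'b,'k) xmor set)"
  have "Gm f \<in> xi_hom X0 Y0 A B" using G_hom[OF F_obj[OF A] F_obj[OF B] f] GF[OF A] GF[OF B] by simp
  moreover have "Gm g \<in> xi_hom X0 Y0 A B" using G_hom[OF F_obj[OF A] F_obj[OF B] g] GF[OF A] GF[OF B] by simp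
  ultimately have "Gm f = Gm g" using T unfolding Tr_def by blast
  then show "f = g" using FGm[OF f] FGm[OF g] by metis
qed

lemma Rt_mono:
  assumes Z: "Z \<in> xi_obj X0 Y0" and A: "A \<in> xi_obj X0 Y0" and R: "Rt K X0 Y0 Z A"
  shows "Rt K X0 Y0 (Fo Z) (Fo A)"
proof -
  from R obtain s r where s: "s \<in> (xi_hom X0 Y0 Z A :: ('a,'b,'k) xmor set)" and r: "r \<in> xi_hom X0 Y0 A Z"
    and c: "xi_comp r s = xi_id Z" unfolding Rt_def by blast
  have "xi_comp (Fm r) (Fm s) = xi_id (Fo Z)"
    using F_comp[OF Z A Z s r] c F_id[OF Z] by simp
  then show ?thesis unfolding Rt_def using F_hom[OF Z A s] F_hom[OF A Z r] by blast
qed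

lemma Sm_mono:
  assumes Z: "Z \<in> xi_obj X0 Y0" and S: "Sm K X0 Y0 Z"
    and Zr_iff: "\<And>W. W \<in> xi_obj X0 Y0 \<Longrightarrow> Zr K X0 Y0 W \<Longrightarrow> Zr K X0 Y0 (Fo W)"
  shows "Sm K X0 Y0 (Fo Z)"
  unfolding Sm_def
proof (intro ballI impI)
  fix W' s' r' assume W': "W' \<in> xi_obj X0 Y0"
    and s': "s' \<in> (xi_hom X0 Y0 W' (Fo Z) :: ('a,'b,'k) xmor set)" and r': "r' \<in> xi_hom X0 Y0 (Fo Z) W'"
    and c: "xi_comp r' s' = xi_id W'"
  let ?W = "Go W'"
  have W: "?W \<in> xi_obj X0 Y0" by (rule G_obj[OF W'])
  have FZ: "Fo Z \<in> xi_obj X0 Y0" by (rule F_obj[OF Z])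
  have s: "Gm s' \<in> xi_hom X0 Y0 ?W Z" using G_hom[OF W' FZ s'] GF[OF Z] by simp
  have r: "Gm r' \<in> xi_hom X0 Y0 Z ?W" using G_hom[OF FZ W' r'] GF[OF Z] by simp
  have "xi_comp (Gm r') (Gm s') = xi_id ?W"
    using G_comp[OF W' FZ W' s' r'] c G_id[OF W'] by simp
  then have "Zr K X0 Y0 ?W \<or> xi_comp (Gm s') (Gm r') = xi_id Z"
    using S W s r unfolding Sm_def by blast
  then show "Zr K X0 Y0 W' \<or> xi_comp s' r' = xi_id (Fo Z)"
  proof
    assume "Zr K X0 Y0 ?W" then show ?thesis using Zr_iff[OF W] FG[OF W'] by simp
  next
    assume e: "xi_comp (Gm s') (Gm r') = xi_id Z"
    have "Fm (xi_comp (Gm s') (Gm r')) = xi_comp (Fm (Gm s')) (Fm (Gm r'))"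
      by (rule F_comp[OF Z W Z r s])
    then show ?thesis using e F_id[OF Z] FGm[OF s'] FGm[OF r'] by simp
  qed
qed

end

lemma transport:
  fixes K :: "'k::field itself" and Fm :: "('a,'b,'k) xmor \<Rightarrow> ('a,'b,'k) xmor"
  assumes iso: "isoP X0 Y0 Fo Fm Go Gm"
  shows "A \<in> xi_obj X0 Y0 \<Longrightarrow> B \<in> xi_obj X0 Y0 \<Longrightarrow> Tr K X0 Y0 (Fo A) (Fo B) \<longleftrightarrow> Tr K X0 Y0 A B"
    and "A \<in> xi_obj X0 Y0 \<Longrightarrow> Zr K X0 Y0 (Fo A) \<longleftrightarrow> Zr K X0 Y0 A"
    and "A \<in> xi_obj X0 Y0 \<Longrightarrow> B \<in> xi_obj X0 Y0 \<Longrightarrow> Rt K X0 Y0 (Fo A) (Fo B) \<longleftrightarrow> Rt K X0 Y0 A B"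
proof -
  have iso': "isoP X0 Y0 Go Gm Fo Fm" by (rule isoP_sym[OF iso])
  show T: "Tr K X0 Y0 (Fo A) (Fo B) \<longleftrightarrow> Tr K X0 Y0 A B"
    if A: "A \<in> xi_obj X0 Y0" and B: "B \<in> xi_obj X0 Y0" for A B
    using Tr_mono[OF iso A B, of K] Tr_mono[OF iso' F_obj[OF iso A] F_obj[OF iso B], of K] GF[OF iso A] GF[OF iso B]
    by auto
  show "Zr K X0 Y0 (Fo A) \<longleftrightarrow> Zr K X0 Y0 A" if A: "A \<in> xi_obj X0 Y0" for A
    using T[OF A A] unfolding Zr_def .
  show "Rt K X0 Y0 (Fo A) (Fo B) \<longleftrightarrow> Rt K X0 Y0 A B"
    if A: "A \<in> xi_obj X0 Y0" and B: "B \<in> xi_obj X0 Y0" for A B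
    using Rt_mono[OF iso A B, of K] Rt_mono[OF iso' F_obj[OF iso A] F_obj[OF iso B], of K] GF[OF iso A] GF[OF iso B]
    by auto
qed

lemma Bt_mono:
  fixes K :: "'k::field itself" and Fm :: "('a,'b,'k) xmor \<Rightarrow> ('a,'b,'k) xmor"
  assumes iso: "isoP X0 Y0 Fo Fm Go Gm" and A: "A \<in> xi_obj X0 Y0" and b: "Bt K X0 Y0 A"
  shows "Bt K X0 Y0 (Fo A)"
proof -
  have "\<not> Zr K X0 Y0 (Fo A)" using b transport(2)[OF iso A] unfolding Bt_def by blast
  moreover have "Zr K X0 Y0 B" if B: "B \<in> xi_obj X0 Y0" and T: "Tr K X0 Y0 (Fo A) B" for B
  proof -
    have GB: "Go B \<in> xi_obj X0 Y0" by (rule G_obj[OF iso B])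
    have "Tr K X0 Y0 (Fo A) (Fo (Go B))" using T FG[OF iso B] by simp
    then have "Tr K X0 Y0 A (Go B)" using transport(1)[OF iso A GB] by simp
    then have "Zr K X0 Y0 (Go B)" using b GB unfolding Bt_def by blast
    then show ?thesis using transport(2)[OF iso GB] FG[OF iso B] by simp
  qed
  ultimately show ?thesis unfolding Bt_def by blast
qed

lemma Bt_transp:
  fixes K :: "'k::field itself" and Fm :: "('a,'b,'k) xmor \<Rightarrow> ('a,'b,'k) xmor"
  assumes iso: "isoP X0 Y0 Fo Fm Go Gm" and A: "A \<in> xi_obj X0 Y0"
  shows "Bt K X0 Y0 (Fo A) \<longleftrightarrow> Bt K X0 Y0 A"
  using Bt_mono[OF iso A, of K] Bt_mono[OF isoP_sym[OF iso] F_obj[OF iso A], of K] GF[OF iso A] by auto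

lemma Pc_mono:
  fixes K :: "'k::field itself" and Fm :: "('a,'b,'k) xmor \<Rightarrow> ('a,'b,'k) xmor"
  assumes iso: "isoP X0 Y0 Fo Fm Go Gm" and A: "A \<in> xi_obj X0 Y0" and P: "Pc K X0 Y0 A"
  shows "Pc K X0 Y0 (Fo A)"
proof -
  have "Bt K X0 Y0 (Fo A)" using P Bt_transp[OF iso A] unfolding Pc_def by blast
  moreover have "Sm K X0 Y0 Z'" if Z': "Z' \<in> xi_obj X0 Y0" and h: "Rt K X0 Y0 Z' (Fo A)"
     "\<not> Zr K X0 Y0 Z'" "\<not> Bt K X0 Y0 Z'" for Z'
  proof -
    let ?Z = "Go Z'"
    have Z: "?Z \<in> xi_obj X0 Y0" by (rule G_obj[OF iso Z'])
    have e: "Fo ?Z = Z'" by (rule FG[OF iso Z'])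
    have "Rt K X0 Y0 ?Z A" using h(1) transport(3)[OF iso Z A] e by simp
    moreover have "\<not> Zr K X0 Y0 ?Z" using h(2) transport(2)[OF iso Z] e by simp
    moreover have "\<not> Bt K X0 Y0 ?Z" using h(3) Bt_transp[OF iso Z] e by simp
    ultimately have "Sm K X0 Y0 ?Z" using P Z unfolding Pc_def by blast
    then have "Sm K X0 Y0 (Fo ?Z)"
      using Sm_mono[OF iso Z] transport(2)[OF iso] by blast
    then show ?thesis using e by simp
  qed
  ultimately show ?thesis unfolding Pc_def by blast
qed


definition idL :: "'a set \<Rightarrow> ('a,'k::field) ncpoly \<Rightarrow> ('a,'k) ncpoly" where
  "idL X = (\<lambda>p. if p \<in> lie_elems X then p else nc_zero)"
definition idM :: "'a set \<Rightarrow> 'b set \<Rightarrow> ('a,'b,'k::field) fmodel \<Rightarrow> ('a,'b,'k) fmodel" where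
  "idM X Y = (\<lambda>m. if m \<in> fmod X Y then m else fm_zero)"

lemma xi_comp_simp[simp]: "xi_comp (B',C,\<phi>',\<psi>') (A,B,\<phi>,\<psi>) = (A,C,\<phi>' \<circ> \<phi>,\<psi>' \<circ> \<psi>)"
  by (simp add: xi_comp_def)

lemma xi_id_simp: "xi_id (X,Y) = ((X,Y),(X,Y),idL X,idM X Y)"
  by (simp add: xi_id_def idL_def idM_def)

lemma idL_hom: "X \<subseteq> X' \<Longrightarrow> lie_hom_on X X' (idL X :: ('a,'k::field) ncpoly \<Rightarrow> _)"
  unfolding lie_hom_on_def idL_def by (auto intro: lie_elems.intros lie_mono)

lemma idM_empty: "idM X {} = (\<lambda>_. fm_zero)"
  by (auto simp: idM_def fmod_empty)

lemma idL_empty: "idL {} = (\<lambda>_. nc_zero)"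
  by (auto simp: idL_def lie_empty)

lemma nc_scale_1[simp]: "nc_scale 1 p = p"
  by (simp add: nc_scale_def)
lemma fm_scale_1[simp]: "fm_scale 1 m = m"
  by (simp add: fm_scale_def)

lemma obj_sub: "(X,Y) \<in> xi_obj X0 Y0 \<Longrightarrow> X' \<subseteq> X \<Longrightarrow> Y' \<subseteq> Y \<Longrightarrow> (X',Y') \<in> xi_obj X0 Y0"
  by (auto simp: xi_obj_def intro: finite_subset)

lemma C1:
  assumes B: "(X,Y) \<in> xi_obj X0 Y0"
  shows "Rt (K::'k::field itself) X0 Y0 (X,{}) (X,Y)"
proof -
  have Z: "(X,{}) \<in> xi_obj X0 Y0" using obj_sub[OF B] by blast
  have lin1: "lin_on_fmod X {} X Y (\<lambda>_. fm_zero :: ('a,'b,'k) fmodel)"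
    using zero_rep_hom[of X "{}" X Y] unfolding rep_hom_def by blast
  have lin2: "lin_on_fmod X Y X {} (\<lambda>_. fm_zero :: ('a,'b,'k) fmodel)"
    using zero_rep_hom[of X Y X "{}"] unfolding rep_hom_def by blast
  let ?s = "((X,{}),(X,Y),idL X,(\<lambda>_. fm_zero)) :: ('a,'b,'k) xmor"
  let ?r = "((X,Y),(X,{}),idL X,(\<lambda>_. fm_zero)) :: ('a,'b,'k) xmor"
  have s: "?s \<in> xi_hom X0 Y0 (X,{}) (X,Y)"
    using B Z idL_hom[of X X] lin1 by (simp add: xi_hom_def rep_hom_def)
  have r: "?r \<in> xi_hom X0 Y0 (X,Y) (X,{})"
    using B Z idL_hom[of X X] lin2 by (simp add: xi_hom_def rep_hom_def)
  have "idL X \<circ> idL X = (idL X :: ('a,'k) ncpoly \<Rightarrow> _)"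
    by (auto simp: idL_def lie_elems.zero)
  then have "xi_comp ?r ?s = xi_id (X,{})" by (simp add: xi_id_simp idM_empty o_def)
  then show ?thesis unfolding Rt_def using s r by blast
qed

text \<open>C2: ({x1},{}) is a retract of (X,{}) but not conversely split.\<close>
lemma C2:
  assumes Z: "(X,{}) \<in> xi_obj X0 Y0" and x1: "x1 \<in> X" and x2: "x2 \<in> X" "x2 \<noteq> x1"
  shows "\<not> Sm (K::'k::field itself) X0 Y0 (X,{})"
proof
  assume S: "Sm K X0 Y0 (X,{})"
  have W: "({x1},{}) \<in> xi_obj X0 Y0" using obj_sub[OF Z] x1 by blast
  have lin: "lin_on_fmod A B C D (\<lambda>_. fm_zero :: ('a,'b,'k) fmodel)" for A B C D
    using zero_rep_hom[of A B C D] unfolding rep_hom_def by blast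
  let ?s = "(({x1},{}),(X,{}),idL {x1},(\<lambda>_. fm_zero)) :: ('a,'b,'k) xmor"
  let ?r = "((X,{}),({x1},{}),phiab X x1 x1,(\<lambda>_. fm_zero)) :: ('a,'b,'k) xmor"
  have s: "?s \<in> xi_hom X0 Y0 ({x1},{}) (X,{})"
    using W Z idL_hom[of "{x1}" X] x1 lin by (simp add: xi_hom_def rep_hom_def)
  have r: "?r \<in> xi_hom X0 Y0 (X,{}) ({x1},{})"
    using W Z phiab_rep_hom[where x'=x1 and X'="{x1}" and X=X and x=x1 and Y="{}" and Y'="{}"] by (simp add: xi_hom_def)
  have e1: "phiab X x1 x1 \<circ> idL {x1} = (idL {x1} :: ('a,'k) ncpoly \<Rightarrow> _)"
  proof
    fix p :: "('a,'k) ncpoly"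
    show "(phiab X x1 x1 \<circ> idL {x1}) p = idL {x1} p"
    proof (cases "p \<in> lie_elems {x1}")
      case True
      then obtain c where c: "p = nc_scale c (nc_gen x1)" unfolding lie_single by auto
      have pX: "p \<in> lie_elems X" using True lie_mono x1 by blast
      have a: "idL {x1} p = p" using True by (simp add: idL_def)
      have b: "phiab X x1 x1 p = nc_scale (p [x1]) (nc_gen x1)" using pX by (simp add: phiab_def)
      have "p [x1] = c" unfolding c by (simp add: nc_scale_def)
      then show ?thesis using a b c by simp
    next
      case False
      then have a: "idL {x1} p = nc_zero" by (simp add: idL_def)
      have "phiab X x1 x1 nc_zero = nc_scale 0 (nc_gen x1)"
        by (simp add: phiab_def lie_elems.zero nc_zero_def)
      then show ?thesis using a by simp
    qed
  qed
  have "xi_comp ?r ?s = xi_id ({x1},{})" using e1 by (simp add: xi_id_simp idM_empty o_def)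
  moreover have "\<not> Zr K X0 Y0 ({x1},{})" using Zr_iff[OF W] by simp
  ultimately have "xi_comp ?s ?r = xi_id (X,{})" using S W s r unfolding Sm_def by blast
  then have "idL {x1} \<circ> phiab X x1 x1 = (idL X :: ('a,'k) ncpoly \<Rightarrow> _)"
    by (simp add: xi_id_simp)
  then have "idL {x1} (phiab X x1 x1 (nc_gen x2)) = (idL X (nc_gen x2) :: ('a,'k) ncpoly)"
    by (metis comp_apply)
  moreover have "phiab X x1 x1 (nc_gen x2) = (nc_zero :: ('a,'k) ncpoly)"
    using x2 by (simp add: phiab_def lie_elems.gen nc_gen_def)
  moreover have "idL X (nc_gen x2) = (nc_gen x2 :: ('a,'k) ncpoly)"
    using x2 by (simp add: idL_def lie_elems.gen)
  ultimately have "nc_zero = (nc_gen x2 :: ('a,'k) ncpoly)" by (simp add: idL_def lie_elems.zero)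
  then show False using nc_gen_nz by metis
qed


definition cpart :: "'a set \<Rightarrow> 'b set \<Rightarrow> ('a,'b,'k::field) fmodel \<Rightarrow> ('a,'b,'k) fmodel" where
  "cpart X Y m = (if m \<in> fmod X Y then (\<lambda>(w,z). if w = [] then m (w,z) else 0) else fm_zero)"

lemma fmod_mono2: "m \<in> fmod X Y \<Longrightarrow> X \<subseteq> X' \<Longrightarrow> Y \<subseteq> Y' \<Longrightarrow> m \<in> fmod X' Y'"
  unfolding fmod_def by blast

lemma cpart_in:
  assumes m: "m \<in> fmod X Y" shows "cpart X Y m \<in> fmod {} Y"
proof -
  have e: "cpart X Y m = (\<lambda>(w,z). if w = [] then m (w,z) else 0)" using m by (simp add: cpart_def)
  have s: "{wz. cpart X Y m wz \<noteq> 0} \<subseteq> {wz. m wz \<noteq> 0}" unfolding e by (auto split: if_splits)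
  have "finite {wz. cpart X Y m wz \<noteq> 0}" using m by (intro finite_subset[OF s]) (simp add: fmod_def)
  moreover have "set w \<subseteq> {} \<and> z \<in> Y" if "cpart X Y m (w,z) \<noteq> 0" for w z
  proof -
    have "w = []" "m (w,z) \<noteq> 0" using that unfolding e by (auto split: if_splits)
    then show ?thesis using m unfolding fmod_def by auto
  qed
  ultimately show ?thesis unfolding fmod_def by blast
qed

lemma cpart_hom: "rep_hom X Y {} Y (\<lambda>_. nc_zero) (cpart X Y :: ('a,'b,'k::field) fmodel \<Rightarrow> _)"
  unfolding rep_hom_def
proof (intro conjI)
  show "lie_hom_on X {} (\<lambda>_. nc_zero :: ('a,'k) ncpoly)"
    using zero_rep_hom unfolding rep_hom_def by blast
  show "lin_on_fmod X Y {} Y (cpart X Y :: ('a,'b,'k) fmodel \<Rightarrow> _)"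
    unfolding lin_on_fmod_def
  proof (intro conjI ballI allI impI)
    fix m :: "('a,'b,'k) fmodel" assume "m \<in> fmod X Y"
    then show "cpart X Y m \<in> fmod {} Y" by (rule cpart_in)
  next
    fix m :: "('a,'b,'k) fmodel" assume "m \<notin> fmod X Y"
    then show "cpart X Y m = fm_zero" by (simp add: cpart_def)
  next
    fix m n :: "('a,'b,'k) fmodel" assume mn: "m \<in> fmod X Y" "n \<in> fmod X Y"
    then have e: "cpart X Y (fm_add m n) = (\<lambda>(w,z). if w = [] then fm_add m n (w,z) else 0)"
      "cpart X Y m = (\<lambda>(w,z). if w = [] then m (w,z) else 0)"
      "cpart X Y n = (\<lambda>(w,z). if w = [] then n (w,z) else 0)"
      by (simp_all add: cpart_def fm_add_fmod)
    show "cpart X Y (fm_add m n) = fm_add (cpart X Y m) (cpart X Y n)"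
      unfolding e by (auto simp: fm_add_def)
  next
    fix c and m :: "('a,'b,'k) fmodel" assume m: "m \<in> fmod X Y"
    then have e: "cpart X Y (fm_scale c m) = (\<lambda>(w,z). if w = [] then fm_scale c m (w,z) else 0)"
      "cpart X Y m = (\<lambda>(w,z). if w = [] then m (w,z) else 0)"
      by (simp_all add: cpart_def fm_scale_fmod)
    show "cpart X Y (fm_scale c m) = fm_scale c (cpart X Y m)"
      unfolding e by (auto simp: fm_scale_def)
  qed
  show "\<forall>l\<in>lie_elems X. \<forall>v\<in>fmod X Y. fm_act nc_zero (cpart X Y (v :: ('a,'b,'k) fmodel)) = cpart X Y (fm_act l v)"
  proof (intro ballI)
    fix l :: "('a,'k) ncpoly" and v :: "('a,'b,'k) fmodel"
    assume l: "l \<in> lie_elems X" and v: "v \<in> fmod X Y"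
    have a: "fm_act l v \<in> fmod X Y" using fm_act_fmod[OF lie_ncpolys[OF l] v] .
    have "cpart X Y (fm_act l v) = (\<lambda>(w,z). if w = [] then fm_act l v (w,z) else 0)"
      using a by (simp add: cpart_def)
    also have "\<dots> = fm_zero"
      by (auto simp: fm_zero_def fm_act_const lie_const[OF l])
    finally show "fm_act nc_zero (cpart X Y (v :: ('a,'b,'k) fmodel)) = cpart X Y (fm_act l v)" by simp
  qed
qed

lemma idM_hom:
  assumes "Y' \<subseteq> Y"
  shows "rep_hom {} Y' X Y (\<lambda>_. nc_zero) (idM {} Y' :: ('a,'b,'k::field) fmodel \<Rightarrow> _)"
  unfolding rep_hom_def
proof (intro conjI)
  show "lie_hom_on {} X (\<lambda>_. nc_zero :: ('a,'k) ncpoly)"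
    using zero_rep_hom unfolding rep_hom_def by blast
  show "lin_on_fmod {} Y' X Y (idM {} Y' :: ('a,'b,'k) fmodel \<Rightarrow> _)"
    unfolding lin_on_fmod_def
  proof (intro conjI ballI allI impI)
    fix m :: "('a,'b,'k) fmodel" assume "m \<in> fmod {} Y'"
    then show "idM {} Y' m \<in> fmod X Y" using assms fmod_mono2[of m "{}" Y' X Y] by (simp add: idM_def)
  next
    fix m :: "('a,'b,'k) fmodel" assume "m \<notin> fmod {} Y'"
    then show "idM {} Y' m = fm_zero" by (simp add: idM_def)
  next
    fix m n :: "('a,'b,'k) fmodel" assume "m \<in> fmod {} Y'" "n \<in> fmod {} Y'"
    then show "idM {} Y' (fm_add m n) = fm_add (idM {} Y' m) (idM {} Y' n)"
      by (simp add: idM_def fm_add_fmod)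
  next
    fix c and m :: "('a,'b,'k) fmodel" assume "m \<in> fmod {} Y'"
    then show "idM {} Y' (fm_scale c m) = fm_scale c (idM {} Y' m)"
      by (simp add: idM_def fm_scale_fmod)
  qed
  show "\<forall>l\<in>lie_elems {}. \<forall>v\<in>fmod {} Y'. fm_act nc_zero (idM {} Y' (v :: ('a,'b,'k) fmodel)) = idM {} Y' (fm_act l v)"
    by (simp add: lie_empty idM_def)
qed

lemma C3:
  assumes B: "(X,Y) \<in> xi_obj X0 Y0"
  shows "Rt (K::'k::field itself) X0 Y0 ({},Y) (X,Y)"
proof -
  have Z: "({},Y) \<in> xi_obj X0 Y0" using obj_sub[OF B] by blast
  let ?s = "(({},Y),(X,Y),(\<lambda>_. nc_zero),idM {} Y) :: ('a,'b,'k) xmor"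
  let ?r = "((X,Y),({},Y),(\<lambda>_. nc_zero),cpart X Y) :: ('a,'b,'k) xmor"
  have s: "?s \<in> xi_hom X0 Y0 ({},Y) (X,Y)"
    using B Z idM_hom[of Y Y X] by (simp add: xi_hom_def)
  have r: "?r \<in> xi_hom X0 Y0 (X,Y) ({},Y)"
    using B Z cpart_hom[of X Y] by (simp add: xi_hom_def)
  have e: "cpart X Y \<circ> idM {} Y = (idM {} Y :: ('a,'b,'k) fmodel \<Rightarrow> _)"
  proof
    fix m :: "('a,'b,'k) fmodel"
    show "(cpart X Y \<circ> idM {} Y) m = idM {} Y m"
    proof (cases "m \<in> fmod {} Y")
      case True
      then have mX: "m \<in> fmod X Y" using fmod_mono by blast
      have "(\<lambda>(w,z). if w = [] then m (w,z) else 0) = m"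
      proof
        fix wz :: "'a list \<times> 'b"
        obtain w z where wz: "wz = (w,z)" by (cases wz)
        show "(\<lambda>(w,z). if w = [] then m (w,z) else 0) wz = m wz"
        proof (cases "w = []")
          case False
          have "m (w,z) = 0"
          proof (rule ccontr)
            assume "m (w,z) \<noteq> 0"
            then have "set w \<subseteq> {}" using True unfolding fmod_def by blast
            then show False using False by simp
          qed
          then show ?thesis using False wz by simp
        qed (simp add: wz)
      qed
      then show ?thesis using True mX by (simp add: idM_def cpart_def)
    next
      case False
      have "cpart X Y fm_zero = (fm_zero :: ('a,'b,'k) fmodel)"
        by (auto simp: cpart_def fm_zero_def)
      then show ?thesis using False by (simp add: idM_def)
    qed
  qed
  have "xi_comp ?r ?s = xi_id ({},Y)"
    using e by (simp add: xi_id_simp idL_empty o_def)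
  then show ?thesis unfolding Rt_def using s r by blast
qed

lemma C4:
  assumes Z: "({},Y) \<in> xi_obj X0 Y0" and y1: "y1 \<in> Y" and y2: "y2 \<in> Y" "y2 \<noteq> y1"
  shows "\<not> Sm (K::'k::field itself) X0 Y0 ({},Y)"
proof
  assume S: "Sm K X0 Y0 ({},Y)"
  have W: "({},{y1}) \<in> xi_obj X0 Y0" using obj_sub[OF Z] y1 by blast
  let ?s = "(({},{y1}),({},Y),(\<lambda>_. nc_zero),idM {} {y1}) :: ('a,'b,'k) xmor"
  let ?r = "(({},Y),({},{y1}),(\<lambda>_. nc_zero),psic {} Y y1 y1) :: ('a,'b,'k) xmor"
  have s: "?s \<in> xi_hom X0 Y0 ({},{y1}) ({},Y)"
    using W Z idM_hom[of "{y1}" Y "{}"] y1 by (simp add: xi_hom_def)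
  have r: "?r \<in> xi_hom X0 Y0 ({},Y) ({},{y1})"
    using W Z psic_rep_hom[where y'=y1 and Y'="{y1}" and X="{}" and Y=Y and X'="{}" and y=y1] by (simp add: xi_hom_def)
  have e1: "psic {} Y y1 y1 \<circ> idM {} {y1} = (idM {} {y1} :: ('a,'b,'k) fmodel \<Rightarrow> _)"
  proof
    fix m :: "('a,'b,'k) fmodel"
    show "(psic {} Y y1 y1 \<circ> idM {} {y1}) m = idM {} {y1} m"
    proof (cases "m \<in> fmod {} {y1}")
      case True
      then have mY: "m \<in> fmod {} Y" using y1 by (auto simp: fmod_def)
      obtain c where c: "m = fm_scale c (dl y1)" using True unfolding fmod_single by auto
      have "m ([],y1) = c" unfolding c by (simp add: fm_scale_def)
      then show ?thesis using True mY c by (simp add: idM_def psic_def)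
    next
      case False
      have "psic {} Y y1 y1 fm_zero = (fm_zero :: ('a,'b,'k) fmodel)"
        by (simp add: psic_def fm_zero_def fm_scale_def)
      then show ?thesis using False by (simp add: idM_def)
    qed
  qed
  have "xi_comp ?r ?s = xi_id ({},{y1})" using e1 by (simp add: xi_id_simp idL_empty o_def)
  moreover have "\<not> Zr K X0 Y0 ({},{y1})" using Zr_iff[OF W] by simp
  ultimately have "xi_comp ?s ?r = xi_id ({},Y)" using S W s r unfolding Sm_def by blast
  then have "idM {} {y1} \<circ> psic {} Y y1 y1 = (idM {} Y :: ('a,'b,'k) fmodel \<Rightarrow> _)"
    by (simp add: xi_id_simp)
  then have "idM {} {y1} (psic {} Y y1 y1 (dl y2)) = (idM {} Y (dl y2) :: ('a,'b,'k) fmodel)"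
    by (metis comp_apply)
  moreover have "psic {} Y y1 y1 (dl y2) = (fm_zero :: ('a,'b,'k) fmodel)"
    using y2 by (simp add: psic_def dl_fmod fm_scale_def fm_zero_def)
  moreover have "idM {} Y (dl y2) = (dl y2 :: ('a,'b,'k) fmodel)"
    using y2 by (simp add: idM_def dl_fmod)
  ultimately have "fm_zero = (dl y2 :: ('a,'b,'k) fmodel)" by (simp add: idM_def)
  then show False using dl_nz by metis
qed


lemma Rt_unpack:
  assumes "Rt (K::'k::field itself) X0 Y0 (X',Y') (X,Y)"
  obtains \<phi>s \<psi>s \<phi>r \<psi>r where "rep_hom X' Y' X Y \<phi>s (\<psi>s :: ('a,'b,'k) fmodel \<Rightarrow> _)"
    "rep_hom X Y X' Y' \<phi>r \<psi>r" "\<phi>r \<circ> \<phi>s = idL X'" "\<psi>r \<circ> \<psi>s = idM X' Y'"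
proof -
  from assms obtain s r where s: "s \<in> (xi_hom X0 Y0 (X',Y') (X,Y) :: ('a,'b,'k) xmor set)"
    and r: "r \<in> xi_hom X0 Y0 (X,Y) (X',Y')" and c: "xi_comp r s = xi_id (X',Y')"
    unfolding Rt_def by blast
  from s obtain \<phi>s \<psi>s where s': "s = ((X',Y'),(X,Y),\<phi>s,\<psi>s)" "rep_hom X' Y' X Y \<phi>s \<psi>s"
    unfolding xi_hom_iff by auto
  from r obtain \<phi>r \<psi>r where r': "r = ((X,Y),(X',Y'),\<phi>r,\<psi>r)" "rep_hom X Y X' Y' \<phi>r \<psi>r"
    unfolding xi_hom_iff by auto
  from c have "\<phi>r \<circ> \<phi>s = idL X'" "\<psi>r \<circ> \<psi>s = idM X' Y'"
    unfolding s'(1) r'(1) by (simp_all add: xi_id_simp)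
  then show ?thesis using that s'(2) r'(2) by blast
qed

lemma idL_in: "p \<in> lie_elems X \<Longrightarrow> idL X p = p" by (simp add: idL_def)
lemma idM_in: "m \<in> fmod X Y \<Longrightarrow> idM X Y m = m" by (simp add: idM_def)
lemma idL_out: "p \<notin> lie_elems X \<Longrightarrow> idL X p = nc_zero" by (simp add: idL_def)
lemma idM_out: "m \<notin> fmod X Y \<Longrightarrow> idM X Y m = fm_zero" by (simp add: idM_def)

lemma inv_app: "f \<circ> g = h \<Longrightarrow> f (g x) = h x"
  by (metis comp_apply)

lemma card_X:
  assumes hs: "lie_hom_on X' {x} \<phi>s" and hr: "lie_hom_on {x} X' (\<phi>r :: ('a,'k::field) ncpoly \<Rightarrow> _)"
    and inv: "\<phi>r \<circ> \<phi>s = idL X'" and x1: "x1 \<in> X'" and x2: "x2 \<in> X'"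
  shows "x1 = x2"
proof (rule ccontr)
  assume ne: "x1 \<noteq> x2"
  let ?g = "nc_gen x :: ('a,'k) ncpoly"
  have g: "?g \<in> lie_elems {x}" by (simp add: lie_elems.gen)
  let ?n = "\<phi>r ?g"
  have g1: "nc_gen x1 \<in> lie_elems X'" "nc_gen x2 \<in> lie_elems X'" using x1 x2 by (simp_all add: lie_elems.gen)
  have "\<phi>s (nc_gen x1) \<in> lie_elems {x}" "\<phi>s (nc_gen x2) \<in> lie_elems {x}"
    using hs g1 unfolding lie_hom_on_def by blast+
  then obtain a b where a: "\<phi>s (nc_gen x1) = nc_scale a ?g" and b: "\<phi>s (nc_gen x2) = nc_scale b ?g"
    unfolding lie_single by auto
  have sc: "\<phi>r (nc_scale c ?g) = nc_scale c ?n" for c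
    using hr g unfolding lie_hom_on_def by blast
  have "nc_gen x1 = \<phi>r (\<phi>s (nc_gen x1))" using inv_app[OF inv] idL_in[OF g1(1)] by metis
  then have e1: "nc_gen x1 = nc_scale a ?n" using a sc by simp
  have "nc_gen x2 = \<phi>r (\<phi>s (nc_gen x2))" using inv_app[OF inv] idL_in[OF g1(2)] by metis
  then have e2: "nc_gen x2 = nc_scale b ?n" using b sc by simp
  have "(1::'k) = a * ?n [x1]" using fun_cong[OF e1, of "[x1]"] by (simp add: nc_scale_def)
  then have n1: "?n [x1] \<noteq> 0" by auto
  have "(0::'k) = b * ?n [x1]" using fun_cong[OF e2, of "[x1]"] ne by (simp add: nc_scale_def nc_gen_def)
  then have "b = 0" using n1 by simp
  then have "nc_gen x2 = (nc_zero :: ('a,'k) ncpoly)" using e2 by simp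
  then show False using nc_gen_nz by metis
qed

lemma card_Y:
  assumes rs: "rep_hom {} Y' {x} {y} \<phi>s \<psi>s" and rr: "rep_hom {x} {y} {} Y' \<phi>r (\<psi>r :: ('a,'b,'k::field) fmodel \<Rightarrow> _)"
    and inv: "\<psi>r \<circ> \<psi>s = idM {} Y'" and y1: "y1 \<in> Y'" and y2: "y2 \<in> Y'"
  shows "y1 = y2"
proof (rule ccontr)
  assume ne: "y1 \<noteq> y2"
  have lhr: "lie_hom_on {x} {} \<phi>r" and lin: "lin_on_fmod {x} {y} {} Y' \<psi>r"
    and comp: "\<forall>l\<in>lie_elems {x}. \<forall>v\<in>fmod {x} {y}. fm_act (\<phi>r l) (\<psi>r v) = \<psi>r (fm_act l v)"
    using rr unfolding rep_hom_def by blast+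
  have pz: "\<phi>r = (\<lambda>_. nc_zero)" using phi_triv[OF lhr] by simp
  let ?g = "nc_gen x :: ('a,'k) ncpoly"
  let ?n = "\<psi>r (dl y)"
  have dly: "(dl y :: ('a,'b,'k) fmodel) \<in> fmod {x} {y}" by (simp add: dl_fmod)
  have key: "\<psi>r m = fm_scale (m ([],y)) ?n" if m: "m \<in> fmod {x} {y}" for m
  proof -
    define m' where "m' = (\<lambda>(w,z). m (x # w, z))"
    have m': "m' \<in> fmod {x} {y}" and dec: "m = fm_add (fm_scale (m ([],y)) (dl y)) (fm_act ?g m')"
      using decomp[OF m] unfolding m'_def by blast+
    have a1: "fm_scale (m ([],y)) (dl y) \<in> fmod {x} {y}" by (rule fm_scale_fmod[OF dly])
    have a2: "fm_act ?g m' \<in> fmod {x} {y}"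
      by (rule fm_act_fmod[OF lie_ncpolys[OF lie_elems.gen] m']) simp
    have "\<psi>r m = fm_add (\<psi>r (fm_scale (m ([],y)) (dl y))) (\<psi>r (fm_act ?g m'))"
      using lin a1 a2 dec unfolding lin_on_fmod_def by metis
    also have "\<psi>r (fm_scale (m ([],y)) (dl y)) = fm_scale (m ([],y)) ?n"
      using lin dly unfolding lin_on_fmod_def by blast
    also have "\<psi>r (fm_act ?g m') = fm_zero"
      using comp m' pz by (metis fm_act_zero1 lie_elems.gen singletonI)
    finally show ?thesis by (simp add: fm_add_def fm_zero_def)
  qed
  have d1: "(dl y1 :: ('a,'b,'k) fmodel) \<in> fmod {} Y'" "(dl y2 :: ('a,'b,'k) fmodel) \<in> fmod {} Y'"
    using y1 y2 by (simp_all add: dl_fmod)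
  have ls: "lin_on_fmod {} Y' {x} {y} \<psi>s" using rs unfolding rep_hom_def by blast
  have "\<psi>s (dl y1) \<in> fmod {x} {y}" "\<psi>s (dl y2) \<in> fmod {x} {y}"
    using ls d1 unfolding lin_on_fmod_def by blast+
  moreover have "dl y1 = \<psi>r (\<psi>s (dl y1))" "dl y2 = \<psi>r (\<psi>s (dl y2))"
    using inv_app[OF inv] idM_in[OF d1(1)] idM_in[OF d1(2)] by metis+
  ultimately obtain c1 c2 where e1: "dl y1 = fm_scale c1 ?n" and e2: "dl y2 = fm_scale c2 ?n"
    using key by metis
  have "(1::'k) = c1 * ?n ([],y1)" using fun_cong[OF e1, of "([],y1)"] by (simp add: fm_scale_def)
  moreover have "(0::'k) = c1 * ?n ([],y2)" using fun_cong[OF e1, of "([],y2)"] ne by (simp add: fm_scale_def)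
  ultimately have "?n ([],y2) = 0" by auto
  moreover have "(1::'k) = c2 * ?n ([],y2)" using fun_cong[OF e2, of "([],y2)"] by (simp add: fm_scale_def)
  ultimately show False by simp
qed


lemma oneDimL:
  assumes hs: "lie_hom_on X'' {x'} \<phi>s" and hr: "lie_hom_on {x'} X'' (\<phi>r :: ('a,'k::field) ncpoly \<Rightarrow> _)"
    and inv: "\<phi>r \<circ> \<phi>s = idL X''" and x'': "x'' \<in> X''"
  shows "\<phi>s \<circ> \<phi>r = idL {x'}"
proof -
  let ?g = "nc_gen x' :: ('a,'k) ncpoly"
  have g: "?g \<in> lie_elems {x'}" by (simp add: lie_elems.gen)
  let ?n = "\<phi>r ?g"
  have n: "?n \<in> lie_elems X''" using hr g unfolding lie_hom_on_def by blast
  have sc: "\<phi>r (nc_scale c ?g) = nc_scale c ?n" for c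
    using hr g unfolding lie_hom_on_def by blast
  have "\<phi>s ?n \<in> lie_elems {x'}" using hs n unfolding lie_hom_on_def by blast
  then obtain c0 where c0: "\<phi>s ?n = nc_scale c0 ?g" unfolding lie_single by auto
  have "?n = \<phi>r (\<phi>s ?n)" using inv_app[OF inv] idL_in[OF n] by metis
  then have nn: "?n = nc_scale c0 ?n" using c0 sc by simp
  have g'': "nc_gen x'' \<in> lie_elems X''" using x'' by (simp add: lie_elems.gen)
  then have "\<phi>s (nc_gen x'') \<in> lie_elems {x'}" using hs unfolding lie_hom_on_def by blast
  then obtain c where c: "\<phi>s (nc_gen x'') = nc_scale c ?g" unfolding lie_single by auto
  have "nc_gen x'' = \<phi>r (\<phi>s (nc_gen x''))" using inv_app[OF inv] idL_in[OF g''] by metis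
  then have "nc_gen x'' = nc_scale c ?n" using c sc by simp
  then have "?n \<noteq> nc_zero" using nc_gen_nz by (metis nc_scale_zero)
  then obtain w where w: "?n w \<noteq> 0" by (auto simp: nc_zero_def)
  have "?n w = c0 * ?n w" using fun_cong[OF nn, of w] by (simp add: nc_scale_def)
  then have "c0 = 1" using w by simp
  show ?thesis
  proof
    fix p :: "('a,'k) ncpoly"
    show "(\<phi>s \<circ> \<phi>r) p = idL {x'} p"
    proof (cases "p \<in> lie_elems {x'}")
      case True
      then obtain d where d: "p = nc_scale d ?g" unfolding lie_single by auto
      have "\<phi>s (nc_scale d ?n) = nc_scale d (\<phi>s ?n)" using hs n unfolding lie_hom_on_def by blast
      then show ?thesis using True d sc c0 \<open>c0 = 1\<close> by (simp add: idL_in)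
    next
      case False
      then have "\<phi>r p = nc_zero" using hr unfolding lie_hom_on_def by blast
      then show ?thesis using False lie_hom_zero[OF hs] by (simp add: idL_out)
    qed
  qed
qed

lemma oneDimV:
  assumes ls: "lin_on_fmod {} Y'' {} {y'} \<psi>s" and lr: "lin_on_fmod {} {y'} {} Y'' (\<psi>r :: ('a,'b,'k::field) fmodel \<Rightarrow> _)"
    and inv: "\<psi>r \<circ> \<psi>s = idM {} Y''" and y'': "y'' \<in> Y''"
  shows "\<psi>s \<circ> \<psi>r = idM {} {y'}"
proof -
  let ?g = "dl y' :: ('a,'b,'k) fmodel"
  have g: "?g \<in> fmod {} {y'}" by (simp add: dl_fmod)
  let ?n = "\<psi>r ?g"
  have n: "?n \<in> fmod {} Y''" using lr g unfolding lin_on_fmod_def by blast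
  have sc: "\<psi>r (fm_scale c ?g) = fm_scale c ?n" for c
    using lr g unfolding lin_on_fmod_def by blast
  have "\<psi>s ?n \<in> fmod {} {y'}" using ls n unfolding lin_on_fmod_def by blast
  then obtain c0 where c0: "\<psi>s ?n = fm_scale c0 ?g" unfolding fmod_single by auto
  have "?n = \<psi>r (\<psi>s ?n)" using inv_app[OF inv] idM_in[OF n] by metis
  then have nn: "?n = fm_scale c0 ?n" using c0 sc by simp
  have g'': "(dl y'' :: ('a,'b,'k) fmodel) \<in> fmod {} Y''" using y'' by (simp add: dl_fmod)
  then have "\<psi>s (dl y'') \<in> fmod {} {y'}" using ls unfolding lin_on_fmod_def by blast
  then obtain c where c: "\<psi>s (dl y'') = fm_scale c ?g" unfolding fmod_single by auto
  have "dl y'' = \<psi>r (\<psi>s (dl y''))" using inv_app[OF inv] idM_in[OF g''] by metis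
  then have "dl y'' = fm_scale c ?n" using c sc by simp
  then have "?n \<noteq> fm_zero" using dl_nz by (metis fm_scale_zero)
  then have "\<exists>w. ?n w \<noteq> 0"
  proof (rule contrapos_np)
    assume "\<not> (\<exists>w. ?n w \<noteq> 0)"
    then show "?n = fm_zero" unfolding fm_zero_def by (intro ext) (metis surj_pair)
  qed
  then obtain w where w: "?n w \<noteq> 0" by blast
  have "?n w = c0 * ?n w" using fun_cong[OF nn, of w] by (simp add: fm_scale_def)
  then have "c0 = 1" using w by simp
  show ?thesis
  proof
    fix m :: "('a,'b,'k) fmodel"
    show "(\<psi>s \<circ> \<psi>r) m = idM {} {y'} m"
    proof (cases "m \<in> fmod {} {y'}")
      case True
      then obtain d where d: "m = fm_scale d ?g" unfolding fmod_single by auto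
      have "\<psi>s (fm_scale d ?n) = fm_scale d (\<psi>s ?n)" using ls n unfolding lin_on_fmod_def by blast
      then show ?thesis using True d sc c0 \<open>c0 = 1\<close> by (simp add: idM_in)
    next
      case False
      then have "\<psi>r m = fm_zero" using lr unfolding lin_on_fmod_def by blast
      then show ?thesis using False lin_zero[OF ls] by (simp add: idM_out)
    qed
  qed
qed

lemma pair_unpack:
  assumes s: "s \<in> (xi_hom X0 Y0 (X',Y') (X,Y) :: ('a,'b,'k::field) xmor set)"
    and r: "r \<in> (xi_hom X0 Y0 (X,Y) (X',Y') :: ('a,'b,'k) xmor set)"
  obtains \<phi>s \<psi>s \<phi>r \<psi>r where "s = ((X',Y'),(X,Y),\<phi>s,\<psi>s)" "r = ((X,Y),(X',Y'),\<phi>r,\<psi>r)"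
    "rep_hom X' Y' X Y \<phi>s \<psi>s" "rep_hom X Y X' Y' \<phi>r \<psi>r"
  using s r unfolding xi_hom_iff by auto

lemma SmL:
  assumes Z: "({x'},{}) \<in> xi_obj X0 Y0"
  shows "Sm (K::'k::field itself) X0 Y0 ({x'},{})"
  unfolding Sm_def
proof (intro ballI impI)
  fix W s r assume W: "W \<in> xi_obj X0 Y0" and s: "s \<in> (xi_hom X0 Y0 W ({x'},{}) :: ('a,'b,'k) xmor set)"
    and r: "r \<in> xi_hom X0 Y0 ({x'},{}) W" and c: "xi_comp r s = xi_id W"
  obtain X'' Y'' where WW: "W = (X'',Y'')" by (cases W)
  obtain \<phi>s \<psi>s \<phi>r \<psi>r where e: "s = ((X'',Y''),({x'},{}),\<phi>s,\<psi>s)" "r = (({x'},{}),(X'',Y''),\<phi>r,\<psi>r)"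
    and rs: "rep_hom X'' Y'' {x'} {} \<phi>s \<psi>s" and rr: "rep_hom {x'} {} X'' Y'' \<phi>r \<psi>r"
    using pair_unpack[OF s[unfolded WW] r[unfolded WW]] by blast
  have inv: "\<phi>r \<circ> \<phi>s = idL X''" "\<psi>r \<circ> \<psi>s = idM X'' Y''"
    using c unfolding e WW by (simp_all add: xi_id_simp)
  have hs: "lie_hom_on X'' {x'} \<phi>s" and ls: "lin_on_fmod X'' Y'' {x'} {} \<psi>s"
    and hr: "lie_hom_on {x'} X'' \<phi>r" and lr: "lin_on_fmod {x'} {} X'' Y'' \<psi>r"
    using rs rr unfolding rep_hom_def by blast+
  have ps: "\<psi>s = (\<lambda>_. fm_zero)" using psi_triv[OF ls] by simp
  have pr: "\<psi>r = (\<lambda>_. fm_zero)" using psi_triv[OF lr] by simp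
  show "Zr K X0 Y0 W \<or> xi_comp s r = xi_id ({x'},{})"
  proof (cases "Zr K X0 Y0 W")
    case False
    then have ne: "X'' \<noteq> {} \<or> Y'' \<noteq> {}" using Zr_iff[OF W[unfolded WW], of K] unfolding WW by blast
    have Y'': "Y'' = {}"
    proof (rule ccontr)
      assume "Y'' \<noteq> {}"
      then obtain y'' where y'': "y'' \<in> Y''" by blast
      have d: "(dl y'' :: ('a,'b,'k) fmodel) \<in> fmod X'' Y''" using y'' by (simp add: dl_fmod)
      have "dl y'' = \<psi>r (\<psi>s (dl y''))" using inv_app[OF inv(2)] idM_in[OF d] by metis
      then have "dl y'' = (fm_zero :: ('a,'b,'k) fmodel)" using ps pr by simp
      then show False using dl_nz by metis
    qed
    then obtain x'' where x'': "x'' \<in> X''" using ne by blast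
    have "\<phi>s \<circ> \<phi>r = idL {x'}" by (rule oneDimL[OF hs hr inv(1) x''])
    moreover have "\<psi>s \<circ> \<psi>r = idM {x'} {}" using ps pr by (simp add: idM_empty o_def)
    ultimately have "xi_comp s r = xi_id ({x'},{})" unfolding e by (simp add: xi_id_simp)
    then show ?thesis by blast
  qed simp
qed

lemma SmV:
  assumes Z: "({},{y'}) \<in> xi_obj X0 Y0"
  shows "Sm (K::'k::field itself) X0 Y0 ({},{y'})"
  unfolding Sm_def
proof (intro ballI impI)
  fix W s r assume W: "W \<in> xi_obj X0 Y0" and s: "s \<in> (xi_hom X0 Y0 W ({},{y'}) :: ('a,'b,'k) xmor set)"
    and r: "r \<in> xi_hom X0 Y0 ({},{y'}) W" and c: "xi_comp r s = xi_id W"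
  obtain X'' Y'' where WW: "W = (X'',Y'')" by (cases W)
  obtain \<phi>s \<psi>s \<phi>r \<psi>r where e: "s = ((X'',Y''),({},{y'}),\<phi>s,\<psi>s)" "r = (({},{y'}),(X'',Y''),\<phi>r,\<psi>r)"
    and rs: "rep_hom X'' Y'' {} {y'} \<phi>s \<psi>s" and rr: "rep_hom {} {y'} X'' Y'' \<phi>r \<psi>r"
    using pair_unpack[OF s[unfolded WW] r[unfolded WW]] by blast
  have inv: "\<phi>r \<circ> \<phi>s = idL X''" "\<psi>r \<circ> \<psi>s = idM X'' Y''"
    using c unfolding e WW by (simp_all add: xi_id_simp)
  have hs: "lie_hom_on X'' {} \<phi>s" and ls: "lin_on_fmod X'' Y'' {} {y'} \<psi>s"
    and hr: "lie_hom_on {} X'' \<phi>r" and lr: "lin_on_fmod {} {y'} X'' Y'' \<psi>r"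
    using rs rr unfolding rep_hom_def by blast+
  have ps: "\<phi>s = (\<lambda>_. nc_zero)" using phi_triv[OF hs] by simp
  have pr: "\<phi>r = (\<lambda>_. nc_zero)" using phi_triv[OF hr] by simp
  show "Zr K X0 Y0 W \<or> xi_comp s r = xi_id ({},{y'})"
  proof (cases "Zr K X0 Y0 W")
    case False
    then have ne: "X'' \<noteq> {} \<or> Y'' \<noteq> {}" using Zr_iff[OF W[unfolded WW], of K] unfolding WW by blast
    have X'': "X'' = {}"
    proof (rule ccontr)
      assume "X'' \<noteq> {}"
      then obtain x'' where x'': "x'' \<in> X''" by blast
      have d: "(nc_gen x'' :: ('a,'k) ncpoly) \<in> lie_elems X''" using x'' by (simp add: lie_elems.gen)
      have "nc_gen x'' = \<phi>r (\<phi>s (nc_gen x''))" using inv_app[OF inv(1)] idL_in[OF d] by metis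
      then have "nc_gen x'' = (nc_zero :: ('a,'k) ncpoly)" using ps pr by simp
      then show False using nc_gen_nz by metis
    qed
    then obtain y'' where y'': "y'' \<in> Y''" using ne by blast
    have "\<psi>s \<circ> \<psi>r = idM {} {y'}" using oneDimV[OF ls[unfolded X''] lr[unfolded X''] inv(2)[unfolded X''] y''] .
    moreover have "\<phi>s \<circ> \<phi>r = idL {}" using ps pr by (simp add: idL_empty o_def)
    ultimately have "xi_comp s r = xi_id ({},{y'})" unfolding e by (simp add: xi_id_simp)
    then show ?thesis by blast
  qed simp
qed


lemma Pc_cyclic:
  assumes A: "({x},{y}) \<in> xi_obj X0 Y0"
  shows "Pc (K::'k::field itself) X0 Y0 ({x},{y})"
proof -
  have x0: "x \<in> X0" and y0: "y \<in> Y0" using A by (auto simp: xi_obj_def)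
  have "Bt K X0 Y0 ({x},{y})" using Bt_iff[OF A x0 y0] by simp
  moreover have "Sm K X0 Y0 Z" if Z: "Z \<in> xi_obj X0 Y0" and h: "Rt K X0 Y0 Z ({x},{y})"
    "\<not> Zr K X0 Y0 Z" "\<not> Bt K X0 Y0 Z" for Z
  proof -
    obtain X' Y' where ZZ: "Z = (X',Y')" by (cases Z)
    have Z': "(X',Y') \<in> xi_obj X0 Y0" using Z ZZ by simp
    have nz: "\<not> (X' = {} \<and> Y' = {})" using h(2) Zr_iff[OF Z', of K] ZZ by simp
    have nb: "\<not> (X' \<noteq> {} \<and> Y' \<noteq> {})" using h(3) Bt_iff[OF Z' x0 y0, of K] ZZ by simp
    obtain \<phi>s \<psi>s \<phi>r \<psi>r where rs: "rep_hom X' Y' {x} {y} \<phi>s (\<psi>s :: ('a,'b,'k) fmodel \<Rightarrow> _)"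
      and rr: "rep_hom {x} {y} X' Y' \<phi>r \<psi>r" and i1: "\<phi>r \<circ> \<phi>s = idL X'" and i2: "\<psi>r \<circ> \<psi>s = idM X' Y'"
      using Rt_unpack[OF h(1)[unfolded ZZ]] by blast
    show ?thesis
    proof (cases "Y' = {}")
      case True
      then obtain x' where x': "x' \<in> X'" using nz by blast
      have hs: "lie_hom_on X' {x} \<phi>s" and hr: "lie_hom_on {x} X' \<phi>r"
        using rs rr unfolding rep_hom_def by blast+
      have "X' = {x'}" using card_X[OF hs hr i1] x' by blast
      then show ?thesis using SmL[of x' X0 Y0, where K=K] Z ZZ True by simp
    next
      case False
      then have X': "X' = {}" using nb by blast
      obtain y' where y': "y' \<in> Y'" using False by blast
      have "Y' = {y'}" using card_Y[OF rs[unfolded X'] rr[unfolded X'] i2[unfolded X']] y' by blast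
      then show ?thesis using SmV[of y' X0 Y0, where K=K] Z ZZ X' by simp
    qed
  qed
  ultimately show ?thesis unfolding Pc_def by blast
qed

lemma Pc_imp_cyclic:
  assumes B: "(X,Y) \<in> xi_obj X0 Y0" and x0: "x0 \<in> X0" and y0: "y0 \<in> Y0"
    and P: "Pc (K::'k::field itself) X0 Y0 (X,Y)"
  shows "cyclic (X,Y)"
proof -
  have "Bt K X0 Y0 (X,Y)" using P unfolding Pc_def by blast
  then have ne': "X \<noteq> {} \<and> Y \<noteq> {}" using Bt_iff[OF B x0 y0, of K] by simp
  then have ne: "X \<noteq> {}" "Y \<noteq> {}" by simp_all
  have Xs: "x1 = x2" if x1: "x1 \<in> X" and x2: "x2 \<in> X" for x1 x2
  proof (rule ccontr)
    assume d: "x1 \<noteq> x2"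
    have Z: "(X,{}) \<in> xi_obj X0 Y0" using obj_sub[OF B] by blast
    have "Rt K X0 Y0 (X,{}) (X,Y)" by (rule C1[OF B])
    moreover have "\<not> Zr K X0 Y0 (X,{})" using Zr_iff[OF Z, of K] ne by simp
    moreover have "\<not> Bt K X0 Y0 (X,{})" using Bt_iff[OF Z x0 y0, of K] by simp
    ultimately have "Sm K X0 Y0 (X,{})" using P Z unfolding Pc_def by blast
    moreover have "\<not> Sm K X0 Y0 (X,{})" using C2[OF Z x1 x2] d by blast
    ultimately show False by blast
  qed
  have Ys: "y1 = y2" if y1: "y1 \<in> Y" and y2: "y2 \<in> Y" for y1 y2
  proof (rule ccontr)
    assume d: "y1 \<noteq> y2"
    have Z: "({},Y) \<in> xi_obj X0 Y0" using obj_sub[OF B] by blast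
    have "Rt K X0 Y0 ({},Y) (X,Y)" by (rule C3[OF B])
    moreover have "\<not> Zr K X0 Y0 ({},Y)" using Zr_iff[OF Z, of K] ne by simp
    moreover have "\<not> Bt K X0 Y0 ({},Y)" using Bt_iff[OF Z x0 y0, of K] by simp
    ultimately have "Sm K X0 Y0 ({},Y)" using P Z unfolding Pc_def by blast
    moreover have "\<not> Sm K X0 Y0 ({},Y)" using C4[OF Z y1 y2] d by blast
    ultimately show False by blast
  qed
  obtain x where x: "x \<in> X" using ne by blast
  obtain y where y: "y \<in> Y" using ne by blast
  have "X = {x}" using Xs x by blast
  moreover have "Y = {y}" using Ys y by blast
  ultimately show ?thesis unfolding cyclic_def by blast
qed

theorem proposition6:
  fixes X0 :: "'a set" and Y0 :: "'b set"
    and Fo :: "('a,'b) xobj \<Rightarrow> ('a,'b) xobj"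
    and Fm :: "('a,'b,'k::field_char_0) xmor \<Rightarrow> ('a,'b,'k) xmor"
  assumes "countable X0" "infinite X0" "countable Y0" "infinite Y0"
    and "infinite (UNIV :: 'k set)"
    and "A \<in> xi_obj X0 Y0" "cyclic A"
    and "xi_automorphism X0 Y0 Fo Fm"
  shows "Fo A \<in> xi_obj X0 Y0 \<and> cyclic (Fo A)"
proof -
  from assms(8) obtain Go Gm where iso: "isoP X0 Y0 Fo Fm Go Gm"
    unfolding xi_automorphism_def isoP_def by blast
  obtain x0 where x0: "x0 \<in> X0" using assms(2) by (metis finite.emptyI ex_in_conv)
  obtain y0 where y0: "y0 \<in> Y0" using assms(4) by (metis finite.emptyI ex_in_conv)
  obtain x y where A: "A = ({x},{y})" using assms(7) unfolding cyclic_def by blast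
  have P: "Pc TYPE('k) X0 Y0 A" using Pc_cyclic[of x y X0 Y0, where K="TYPE('k)"] assms(6) A by simp
  have FA: "Fo A \<in> xi_obj X0 Y0" by (rule F_obj[OF iso assms(6)])
  have "Pc TYPE('k) X0 Y0 (Fo A)" by (rule Pc_mono[OF iso assms(6) P])
  then have "cyclic (Fo A)" using Pc_imp_cyclic[of "fst (Fo A)" "snd (Fo A)" X0 Y0 x0 y0] FA x0 y0 by simp
  then show ?thesis using FA by blast
qed


end
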